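(* Let $L'=\{E,H,\leq\}$ where $E$ is binary, $H$ is ternary and $\leq$ is binary. Let $\mathbf F$ be the $\{E,H\}$-structure with vertex set $\{0,1,2,3\}$, $E^{\mathbf F}=\{(1,0),(1,2),(1,3)\}$ and $H^{\mathbf F}=\{(0,2,3)\}$, and let $\mathbf F'$ be its expansion to an $L'$-structure by the natural order of vertices. Let $\mathcal K$ be the class of all enumerated $L'$-structures $\mathbf A$ for which there is no monomorphism $\mathbf F\to\mathbf A$. Then $\mathcal K$ does not have the type-respecting amalgamation property.
   Context: A monomorphism is an injective map preserving the relations $E$ and $H$ (not necessarily reflecting them). In all $L'$-structures $\leq$ is a linear order, finite or of type $\omega$; an enumerated structure has underlying set an ordinal $|A|$ ordered by $\leq$; embeddings are monotone, injective, and preserve and reflect all relations. $\mathbf A({<}v)$ is the substructure on $\{a<v\}$ (an initial segment). Weak types: $L'^f$ is $L'$ plus a unary partial function $f$. An $L'^f$-structure $\mathbf T$ is a weak type of level $\ell$ if $T=\{0,\dots,\ell-1,t_0,t_1,\dots\}$; every tuple in every relation $R^{\mathbf T}$, $R\in L'$, meets $\{t_0,t_1,\dots\}$ in a set $\{t_i:i<k\}$ and meets $\{0,\dots,\ell-1\}$; and $f(t_i)=t_{i-1}$ ($i>0$), $f(t_0)=t_0$, $f$ undefined otherwise. An increasing tuple $(a_0,\dots,a_{k-1})$ of vertices of $A\setminus\ell$ in an enumerated $\mathbf A$ has type $\mathbf T$ on level $\ell$ if the map $h$ (identity on $\ell$, $t_i\mapsto a_i$) satisfies $\vec b\in R^{\mathbf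 T}\iff h(\vec b)\in R^{\mathbf A}$ for all $R\in L'$ and all tuples $\vec b$ from $\{0,\dots,\ell-1,t_0,\dots,t_{k-1}\}$ meeting the type vertices in an initial segment and meeting $\{0,\dots,\ell-1\}$. $\mathbf T$ extends $\mathbf A$ if $\mathbf T$ minus its type vertices is $\mathbf A$; $\mathbf T,\mathbf T'$ agree as $n$-types if they coincide on $A\cup\{t_0,\dots,t_{n-1}\}$. For finite enumerated $\mathbf A$, $\mathbf A^+$ is the disjoint union of all weak types extending $\mathbf A$, with all copies of $\mathbf A$ identified and the copies of $t_i$ in $\mathbf T,\mathbf T'$ identified whenever $\mathbf T,\mathbf T'$ agree as $(i+1)$-types. An embedding $h:\mathbf A\to\mathbf B$ is type-respecting if for each $v\in A$ there is an embedding $h^v:\mathbf A({<}v)^+\to\mathbf B({<}h(v))^+$ whose image contains all weak types on level $h(v)$ of tuples of vertices of $h[A]$. For finite enumerated $\mathbf A,\mathbf B$, $h:\mathbf A^+\to\mathbf B^+$ is type-respecting (resp. $\mathcal K$-type-respecting) if for every $\mathbf A'$ (resp. $\mathbf A'\in\mathcal K$) with initial segment $\mathbf A$ there are $\mathbf B'$ (resp. $\mathbf B'\in\mathcal K$) with initial segment $\mathbf B$ and a type-respecting embedding $g:\mathbf A'\to\mathbf B'$ with $g\restriction A=h\restriction A$ and with every weak type in $\mathbf B'$ of level $g(\max A)$ of a tuple of vertices of $g[A']$ lying in $h[A^+]$. A hereditary class $\mathcal K$ of enumerated structures has the type-respecting amalgamation property if for all finite enumerated $\mathbf A,\mathbf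 B,\mathbf B'\in\mathcal K$ with $B'\setminus B=\{\max B'\}$ and $\mathbf B'\restriction B=\mathbf B$, all $\mathcal K$-type-respecting $f:\mathbf A^+\to\mathbf B^+$, $f':\mathbf A^+\to\mathbf B'^+$ and every type-respecting $g:\mathbf B^+\to\mathbf B'^+$ with $g\restriction B=\mathrm{Id}$ and $g\circ f=f'$, there is a $\mathcal K$-type-respecting $g':\mathbf B^+\to\mathbf B'^+$ with $g'\circ f=f'$ and $g'\restriction B=\mathrm{Id}$. *)

theory Defs
  imports Main
begin

datatype 'a fact = FE 'a 'a | FH 'a 'a 'a | FL 'a 'a

text \<open>An enumerated structure has underlying set an ordinal (a finite n or omega), ordered
  by the natural order; we store the carrier and the relations E and H.\<close>
record estr =
  ecar :: "nat set"
  eE :: "(nat \<times> nat) set"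
  eH :: "(nat \<times> nat \<times> nat) set"

definition enumerated :: "estr \<Rightarrow> bool" where
  "enumerated A \<longleftrightarrow> (ecar A = UNIV \<or> (\<exists>n. ecar A = {..<n}))
     \<and> eE A \<subseteq> ecar A \<times> ecar A \<and> eH A \<subseteq> ecar A \<times> ecar A \<times> ecar A"

definition rels_of :: "estr \<Rightarrow> nat fact set" where
  "rels_of A = {FE a b | a b. (a, b) \<in> eE A} \<union> {FH a b c | a b c. (a, b, c) \<in> eH A}
     \<union> {FL a b | a b. a \<in> ecar A \<and> b \<in> ecar A \<and> a \<le> b}"

definition restr :: "estr \<Rightarrow> nat \<Rightarrow> estr" where
  "restr A v = \<lparr>ecar = ecar A \<inter> {..<v}, eE = eE A \<inter> ({..<v} \<times> {..<v}),
     eH = eH A \<inter> ({..<v} \<times> {..<v} \<times> {..<v})\<rparr>"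

definition init_seg :: "estr \<Rightarrow> estr \<Rightarrow> bool" where
  "init_seg A A' \<longleftrightarrow> finite (ecar A) \<and> ecar A \<subseteq> ecar A' \<and> A = restr A' (card (ecar A))"

definition emb_e :: "estr \<Rightarrow> estr \<Rightarrow> (nat \<Rightarrow> nat) \<Rightarrow> bool" where
  "emb_e A B h \<longleftrightarrow> h ` ecar A \<subseteq> ecar B \<and> inj_on h (ecar A) \<and>
     (\<forall>\<phi>. set_fact \<phi> \<subseteq> ecar A \<longrightarrow> (\<phi> \<in> rels_of A \<longleftrightarrow> map_fact h \<phi> \<in> rels_of B))"

definition mono_EH :: "estr \<Rightarrow> estr \<Rightarrow> (nat \<Rightarrow> nat) \<Rightarrow> bool" where
  "mono_EH F A m \<longleftrightarrow> inj_on m (ecar F) \<and> m ` ecar F \<subseteq> ecar A \<and>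
     (\<forall>a b. (a, b) \<in> eE F \<longrightarrow> (m a, m b) \<in> eE A) \<and>
     (\<forall>a b c. (a, b, c) \<in> eH F \<longrightarrow> (m a, m b, m c) \<in> eH A)"

text \<open>Atoms of a weak type of level l: base vertices 0..l-1 and type vertices t_0, t_1, ...\<close>
datatype atom = Bs nat | Tv nat

text \<open>A relational tuple allowed in a weak type of level l with type vertices among
  t_0..t_(m-1): it meets the base, and meets the type vertices in a nonempty initial segment
  {t_i : i < k}.  (Tuples meeting no type vertex form the base structure A itself, which is
  fixed, so a weak type extending A is determined by its set of such proper tuples.)\<close>
definition proper :: "nat \<Rightarrow> nat \<Rightarrow> atom fact \<Rightarrow> bool" where
  "proper l m \<phi> \<longleftrightarrow> set_fact \<phi> \<subseteq> Bs ` {..<l} \<union> Tv ` {..<m} \<and>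
     (\<exists>j. Bs j \<in> set_fact \<phi>) \<and> (\<exists>k>0. {i. Tv i \<in> set_fact \<phi>} = {..<k})"

definition trunc :: "nat \<Rightarrow> atom fact set \<Rightarrow> atom fact set" where
  "trunc n S = {\<phi> \<in> S. \<forall>i. Tv i \<in> set_fact \<phi> \<longrightarrow> i < n}"

fun interp :: "nat list \<Rightarrow> atom \<Rightarrow> nat" where
  "interp as (Bs j) = j"
| "interp as (Tv i) = as ! i"

text \<open>The weak type (as a k-type, k = length as) on level l of the increasing tuple as
  of vertices of B (all at least l).\<close>
definition tp :: "estr \<Rightarrow> nat \<Rightarrow> nat list \<Rightarrow> atom fact set" where
  "tp B l as = {\<phi>. proper l (length as) \<phi> \<and> map_fact (interp as) \<phi> \<in> rels_of B}"

record 'v lfs =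
  lcar :: "'v set"
  lrels :: "'v fact set"
  lfn :: "'v \<Rightarrow> 'v option"

definition is_emb :: "('v, 'x) lfs_scheme \<Rightarrow> ('w, 'y) lfs_scheme \<Rightarrow> ('v \<Rightarrow> 'w) \<Rightarrow> bool" where
  "is_emb M N h \<longleftrightarrow> h ` lcar M \<subseteq> lcar N \<and> inj_on h (lcar M) \<and>
     (\<forall>\<phi>. set_fact \<phi> \<subseteq> lcar M \<longrightarrow> (\<phi> \<in> lrels M \<longleftrightarrow> map_fact h \<phi> \<in> lrels N)) \<and>
     (\<forall>x\<in>lcar M. lfn N (h x) = map_option h (lfn M x))"

text \<open>Vertices of A^+: base vertices, and the copy of t_i, identified by the (i+1)-type.\<close>
datatype pv = PB nat | PT nat "atom fact set"

definition plus_car :: "estr \<Rightarrow> pv set" where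
  "plus_car A = PB ` ecar A \<union>
     {PT i S | i S. S \<subseteq> {\<phi>. proper (card (ecar A)) (Suc i) \<phi>}}"

fun sig :: "atom fact set \<Rightarrow> atom \<Rightarrow> pv" where
  "sig S (Bs j) = PB j"
| "sig S (Tv i) = PT i (trunc (Suc i) S)"

definition plus_rels :: "estr \<Rightarrow> pv fact set" where
  "plus_rels A = map_fact PB ` rels_of A \<union>
     {map_fact (sig S) \<phi> | m S \<phi>. S \<subseteq> {\<psi>. proper (card (ecar A)) m \<psi>} \<and> \<phi> \<in> S}"

fun plus_fn :: "pv \<Rightarrow> pv option" where
  "plus_fn (PB j) = None"
| "plus_fn (PT 0 S) = Some (PT 0 S)"
| "plus_fn (PT (Suc i) S) = Some (PT i (trunc (Suc i) S))"

definition plus :: "estr \<Rightarrow> pv lfs" where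
  "plus A = \<lparr>lcar = plus_car A, lrels = plus_rels A, lfn = plus_fn\<rparr>"

definition tr_emb :: "estr \<Rightarrow> estr \<Rightarrow> (nat \<Rightarrow> nat) \<Rightarrow> bool" where
  "tr_emb A B h \<longleftrightarrow> emb_e A B h \<and>
     (\<forall>v\<in>ecar A. \<exists>hv. is_emb (plus (restr A v)) (plus (restr B (h v))) hv \<and>
        (\<forall>as. as \<noteq> [] \<and> sorted_wrt (<) as \<and> set as \<subseteq> h ` ecar A \<and> (\<forall>a\<in>set as. h v \<le> a)
           \<longrightarrow> PT (length as - 1) (tp B (h v) as) \<in> hv ` plus_car (restr A v)))"

text \<open>Type-respecting (P = everything) resp. K-type-respecting (P = membership in K)
  embeddings A^+ -> B^+ for finite enumerated A, B.\<close>
definition trp :: "(estr \<Rightarrow> bool) \<Rightarrow> estr \<Rightarrow> estr \<Rightarrow> (pv \<Rightarrow> pv) \<Rightarrow> bool" where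
  "trp P A B h \<longleftrightarrow> is_emb (plus A) (plus B) h \<and>
     (\<forall>A'. enumerated A' \<and> P A' \<and> init_seg A A' \<longrightarrow>
        (\<exists>B' g. enumerated B' \<and> P B' \<and> init_seg B B' \<and> tr_emb A' B' g \<and>
           (\<forall>a\<in>ecar A. PB (g a) = h (PB a)) \<and>
           (\<forall>as. as \<noteq> [] \<and> sorted_wrt (<) as \<and> set as \<subseteq> g ` ecar A' \<and>
                 (\<forall>a\<in>set as. card (ecar B) \<le> a)
              \<longrightarrow> PT (length as - 1) (tp B' (card (ecar B)) as) \<in> h ` plus_car A)))"

definition type_respecting_AP :: "estr set \<Rightarrow> bool" where
  "type_respecting_AP K \<longleftrightarrow>
    (\<forall>A B B' f f' g.
       A \<in> K \<and> B \<in> K \<and> B' \<in> K \<and>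
       enumerated A \<and> enumerated B \<and> enumerated B' \<and>
       finite (ecar A) \<and> finite (ecar B) \<and> finite (ecar B') \<and>
       ecar B' - ecar B = {Max (ecar B')} \<and> restr B' (card (ecar B)) = B \<and>
       trp (\<lambda>X. X \<in> K) A B f \<and> trp (\<lambda>X. X \<in> K) A B' f' \<and>
       trp (\<lambda>_. True) B B' g \<and> (\<forall>b\<in>ecar B. g (PB b) = PB b) \<and>
       (\<forall>x\<in>plus_car A. g (f x) = f' x)
     \<longrightarrow> (\<exists>g'. trp (\<lambda>X. X \<in> K) B B' g' \<and> (\<forall>x\<in>plus_car A. g' (f x) = f' x) \<and>
               (\<forall>b\<in>ecar B. g' (PB b) = PB b)))"

definition F :: estr where
  "F = \<lparr>ecar = {0, 1, 2, 3}, eE = {(1, 0), (1, 2), (1, 3)}, eH = {(0, 2, 3)}\<rparr>"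

definition K :: "estr set" where
  "K = {A. enumerated A \<and> \<not> (\<exists>m. mono_EH F A m)}"

end

theory Submission
  imports Defs
begin

lemma rels_of_simps[simp]:
  "FE a b \<in> rels_of X \<longleftrightarrow> (a,b) \<in> eE X"
  "FH a b c \<in> rels_of X \<longleftrightarrow> (a,b,c) \<in> eH X"
  "FL a b \<in> rels_of X \<longleftrightarrow> a \<in> ecar X \<and> b \<in> ecar X \<and> a \<le> b"
  by (auto simp: rels_of_def)

lemma rels_of_car:
  assumes "eE X \<subseteq> ecar X \<times> ecar X" "eH X \<subseteq> ecar X \<times> ecar X \<times> ecar X" "\<phi> \<in> rels_of X"
  shows "set_fact \<phi> \<subseteq> ecar X"
  using assms by (cases \<phi>) auto

lemma restr_simps[simp]: "ecar (restr X v) = ecar X \<inter> {..<v}"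
  "eE (restr X v) = eE X \<inter> ({..<v} \<times> {..<v})"
  "eH (restr X v) = eH X \<inter> ({..<v} \<times> {..<v} \<times> {..<v})"
  by (simp_all add: restr_def)

lemma rels_restr: "rels_of (restr X w) = {\<phi> \<in> rels_of X. set_fact \<phi> \<subseteq> {..<w}}"
  apply (rule set_eqI)
  subgoal for \<phi> by (cases \<phi>) auto
  done

lemma restr_restr: "v \<le> w \<Longrightarrow> restr (restr X w) v = restr X v"
  by (auto simp: restr_def)

fun proj :: "pv \<Rightarrow> atom" where
  "proj (PB j) = Bs j" | "proj (PT i S) = Tv i"

lemma proj_sig[simp]: "proj (sig S a) = a"
  by (cases a) auto

lemma map_proj_sig[simp]: "map_fact proj (map_fact (sig S) \<phi>) = \<phi>"
  by (simp add: fact.map_comp comp_def fact.map_ident)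

lemma map_eqD: "map_fact f \<phi> = map_fact g \<phi> \<Longrightarrow> x \<in> set_fact \<phi> \<Longrightarrow> f x = g x"
  by (cases \<phi>) auto

lemma proper_Tv0: "proper l m \<phi> \<Longrightarrow> Tv 0 \<in> set_fact \<phi>"
  unfolding proper_def by force

lemma proper_Tv_lt: "proper l m \<phi> \<Longrightarrow> Tv i \<in> set_fact \<phi> \<Longrightarrow> i < m"
  unfolding proper_def by auto

lemma proper_Bs_lt: "proper l m \<phi> \<Longrightarrow> Bs j \<in> set_fact \<phi> \<Longrightarrow> j < l"
  unfolding proper_def by auto

lemma trunc_sub: "trunc k S \<subseteq> S" by (auto simp: trunc_def)

lemma trunc_trunc: "j \<le> k \<Longrightarrow> trunc j (trunc k S) = trunc j S"
  by (auto simp: trunc_def)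

lemma trunc_id: "S \<subseteq> Collect (proper l m) \<Longrightarrow> trunc m S = S"
  by (auto simp: trunc_def dest: proper_Tv_lt)

lemma sig_in_set: "y \<in> set_fact (map_fact (sig S) \<psi>) \<Longrightarrow> y = sig S (proj y)"
  by (auto simp: fact.set_map)

lemma sig_rel:
  assumes S: "S \<subseteq> Collect (proper L m)" and \<phi>: "proper L m \<phi>" and L: "card (ecar X) = L"
  shows "map_fact (sig S) \<phi> \<in> plus_rels X \<longleftrightarrow> \<phi> \<in> S"
proof
  assume "\<phi> \<in> S" thus "map_fact (sig S) \<phi> \<in> plus_rels X" using S L unfolding plus_rels_def by blast
next
  assume h: "map_fact (sig S) \<phi> \<in> plus_rels X"
  have T0: "Tv 0 \<in> set_fact \<phi>" using \<phi> by (rule proper_Tv0)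
  have "PT 0 (trunc 1 S) \<in> set_fact (map_fact (sig S) \<phi>)"
    using T0 by (metis fact.set_map imageI sig.simps(2) One_nat_def)
  hence nPB: "map_fact (sig S) \<phi> \<notin> map_fact PB ` rels_of X"
  proof (intro notI)
    assume PTin: "PT 0 (trunc 1 S) \<in> set_fact (map_fact (sig S) \<phi>)"
      and "map_fact (sig S) \<phi> \<in> map_fact PB ` rels_of X"
    then obtain xa where "map_fact (sig S) \<phi> = map_fact PB xa" by auto
    with PTin have "PT 0 (trunc 1 S) \<in> PB ` set_fact xa" by (metis fact.set_map)
    thus False by auto
  qed
  from h nPB obtain m' S' \<phi>' where e: "map_fact (sig S) \<phi> = map_fact (sig S') \<phi>'"
    and S': "S' \<subseteq> Collect (proper (card (ecar X)) m')" and "\<phi>' \<in> S'"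
    unfolding plus_rels_def by blast
  have "\<phi>' = \<phi>" using arg_cong[OF e, of "map_fact proj"] by simp
  obtain k where k: "k > 0" "{i. Tv i \<in> set_fact \<phi>} = {..<k}" using \<phi> unfolding proper_def by blast
  have "k - 1 \<in> {i. Tv i \<in> set_fact \<phi>}" unfolding k(2) using k(1) by simp
  hence "Tv (k-1) \<in> set_fact \<phi>" by simp
  moreover have "map_fact (sig S) \<phi> = map_fact (sig S') \<phi>" using e \<open>\<phi>' = \<phi>\<close> by simp
  ultimately have "sig S (Tv (k-1)) = sig S' (Tv (k-1))" by (rule map_eqD[rotated])
  hence tk: "trunc k S = trunc k S'" using k by simp
  have "\<phi> \<in> trunc k S'" using \<open>\<phi>' \<in> S'\<close> \<open>\<phi>' = \<phi>\<close> k by (auto simp: trunc_def)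
  thus "\<phi> \<in> S" using tk trunc_sub by blast
qed

lemma is_emb_id: "is_emb M M id"
  unfolding is_emb_def by (simp add: fact.map_id option.map_id)

definition sh :: "nat \<Rightarrow> nat \<Rightarrow> nat \<Rightarrow> nat" where
  "sh n d x = (if x < n then x else x + d)"

fun sga :: "nat \<Rightarrow> nat \<Rightarrow> atom \<Rightarrow> atom" where
  "sga n d (Bs j) = Bs (sh n d j)" | "sga n d (Tv i) = Tv i"

definition extra :: "nat \<Rightarrow> nat \<Rightarrow> bool \<Rightarrow> atom fact set \<Rightarrow> atom fact set" where
  "extra n d r S = {FL (Bs j) (Tv 0) | j. n \<le> j \<and> j < n + d} \<union>
     (if r \<and> FE (Bs 0) (Tv 0) \<in> S then {FE (Bs 2) (Tv 0)} else {})"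

definition rl :: "nat \<Rightarrow> nat \<Rightarrow> bool \<Rightarrow> atom fact set \<Rightarrow> atom fact set" where
  "rl n d r S = map_fact (sga n d) ` S \<union> extra n d r S"

fun hmap :: "nat \<Rightarrow> nat \<Rightarrow> bool \<Rightarrow> pv \<Rightarrow> pv" where
  "hmap n d r (PB a) = PB (sh n d a)" | "hmap n d r (PT i S) = PT i (rl n d r S)"

lemma sh_inj[simp]: "sh n d x = sh n d y \<longleftrightarrow> x = y"
  by (auto simp: sh_def)

lemma sh_le[simp]: "sh n d x \<le> sh n d y \<longleftrightarrow> x \<le> y"
  by (auto simp: sh_def)

lemma sh_less[simp]: "sh n d x < sh n d y \<longleftrightarrow> x < y"
  by (auto simp: sh_def)

lemma sh_notins: "n \<le> sh n d x \<Longrightarrow> sh n d x < n + d \<Longrightarrow> False"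
  by (auto simp: sh_def split: if_splits)

lemma sh_lt_iff: "n \<le> l \<Longrightarrow> sh n d x < l + d \<longleftrightarrow> x < l"
  by (auto simp: sh_def)

lemma sh_small: "x < n \<Longrightarrow> sh n d x = x"
  by (auto simp: sh_def)

lemma sga_inj: "inj (sga n d)"
proof (rule injI)
  fix a b show "sga n d a = sga n d b \<Longrightarrow> a = b" by (cases a; cases b) auto
qed

lemma map_sga_inj[simp]: "map_fact (sga n d) \<phi> = map_fact (sga n d) \<psi> \<longleftrightarrow> \<phi> = \<psi>"
  using fact.inj_map[OF sga_inj] by (auto dest: injD)

lemma sga_eq_Tv[simp]: "sga n d x = Tv i \<longleftrightarrow> x = Tv i" "Tv i = sga n d x \<longleftrightarrow> x = Tv i"
  by (cases x; auto)+

lemma sga_eq_Bs[simp]: "sga n d x = Bs j \<longleftrightarrow> (\<exists>j'. x = Bs j' \<and> j = sh n d j')"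
   "Bs j = sga n d x \<longleftrightarrow> (\<exists>j'. x = Bs j' \<and> j = sh n d j')"
  by (cases x; auto)+

lemma sga_Tv_iff[simp]: "Tv i \<in> sga n d ` A \<longleftrightarrow> Tv i \<in> A"
  by (auto intro: rev_image_eqI[where x="Tv i"])

lemma sga_Bs_noins: "Bs j \<in> set_fact (map_fact (sga n d) \<phi>) \<Longrightarrow> n \<le> j \<Longrightarrow> j < n + d \<Longrightarrow> False"
  by (auto simp: fact.set_map dest: sh_notins)

lemma extra_ins: "\<psi> \<in> extra n d r S \<Longrightarrow> (r \<Longrightarrow> n \<le> 2 \<and> 2 < n + d) \<Longrightarrow> \<exists>j. n \<le> j \<and> j < n + d \<and> Bs j \<in> set_fact \<psi>"
  by (auto simp: extra_def split: if_splits)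

lemma rl_inj:
  assumes "r \<Longrightarrow> n \<le> 2 \<and> 2 < n + d"
  shows "map_fact (sga n d) \<phi> \<in> rl n d r S \<longleftrightarrow> \<phi> \<in> S"
proof
  assume "map_fact (sga n d) \<phi> \<in> rl n d r S"
  moreover have "map_fact (sga n d) \<phi> \<notin> extra n d r S"
    using extra_ins[OF _ assms] sga_Bs_noins by blast
  ultimately show "\<phi> \<in> S" unfolding rl_def by auto
qed (auto simp: rl_def)

lemma rl_eq:
  assumes "r \<Longrightarrow> n \<le> 2 \<and> 2 < n + d" "rl n d r S = rl n d r S'"
  shows "S = S'"
  using rl_inj[OF assms(1), where S=S] rl_inj[OF assms(1), where S=S'] assms(2) by blast

lemma trunc_sga: "trunc k (map_fact (sga n d) ` S) = map_fact (sga n d) ` trunc k S"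
  by (auto simp: trunc_def fact.set_map)

lemma rl_trunc: "0 < k \<Longrightarrow> trunc k (rl n d r S) = rl n d r (trunc k S)"
  unfolding rl_def trunc_def extra_def by (auto simp: fact.set_map)

lemma proper_sga: "proper l m \<phi> \<Longrightarrow> n \<le> l \<Longrightarrow> proper (l + d) m (map_fact (sga n d) \<phi>)"
  unfolding proper_def fact.set_map
  apply (intro conjI)
  subgoal by (auto simp: sh_lt_iff)
  subgoal proof (elim conjE exE)
    fix j assume "Bs j \<in> set_fact \<phi>"
    hence "Bs (sh n d j) \<in> sga n d ` set_fact \<phi>" by (rule rev_image_eqI) simp
    thus ?thesis by blast
  qed
  subgoal by simp
  done

lemma rl_proper:
  assumes "S \<subseteq> Collect (proper l m)" "n \<le> l" "r \<Longrightarrow> 2 < n + d" "0 < m"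
  shows "rl n d r S \<subseteq> Collect (proper (l + d) m)"
proof
  fix \<psi> assume "\<psi> \<in> rl n d r S"
  then consider (a) \<phi> where "\<phi> \<in> S" "\<psi> = map_fact (sga n d) \<phi>" | (b) "\<psi> \<in> extra n d r S"
    unfolding rl_def by blast
  then show "\<psi> \<in> Collect (proper (l + d) m)"
  proof cases
    case a thus ?thesis using assms proper_sga by blast
  next
    case b
    have e: "{i. i = 0} = {..<Suc 0}" by auto
    show ?thesis using b assms(2-4) unfolding extra_def proper_def
      by (auto split: if_splits simp: e)
  qed
qed

lemma proj_hmap[simp]: "proj (hmap n d r x) = sga n d (proj x)"
  by (cases x) auto

lemma hmap_sig: "hmap n d r (sig S a) = sig (rl n d r S) (sga n d a)"
  by (cases a) (auto simp: rl_trunc)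

lemma plus_car_PB[simp]: "PB a \<in> plus_car X \<longleftrightarrow> a \<in> ecar X"
  by (auto simp: plus_car_def)

lemma plus_car_PT[simp]: "PT i S \<in> plus_car X \<longleftrightarrow> S \<subseteq> Collect (proper (card (ecar X)) (Suc i))"
  by (auto simp: plus_car_def)

lemma inj_PB: "inj PB" by (auto intro: injI)

fun pbn :: "pv \<Rightarrow> nat" where "pbn (PB a) = a" | "pbn (PT i S) = 0"

lemma plus_emb:
  assumes cX: "ecar X = {..<l}" and EX: "eE X \<subseteq> ecar X \<times> ecar X" and HX: "eH X \<subseteq> ecar X \<times> ecar X \<times> ecar X"
    and cY: "ecar Y = {..<l+d}" and nl: "n \<le> l" and r2: "r \<Longrightarrow> n \<le> 2 \<and> 2 < n + d"
    and em: "\<And>\<phi>. set_fact \<phi> \<subseteq> ecar X \<Longrightarrow> \<phi> \<in> rels_of X \<longleftrightarrow> map_fact (sh n d) \<phi> \<in> rels_of Y"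
  shows "is_emb (plus X) (plus Y) (hmap n d r)"
proof -
  have rleq: "\<And>S S'. rl n d r S = rl n d r S' \<Longrightarrow> S = S'"
    using rl_eq r2 by blast
  have rlinj: "\<And>\<phi> S. map_fact (sga n d) \<phi> \<in> rl n d r S \<longleftrightarrow> \<phi> \<in> S"
    using rl_inj r2 by blast
  have cardX: "card (ecar X) = l" and cardY: "card (ecar Y) = l + d" using cX cY by simp_all
  have img: "hmap n d r ` plus_car X \<subseteq> plus_car Y"
  proof
    fix y assume "y \<in> hmap n d r ` plus_car X"
    then obtain x where x: "x \<in> plus_car X" "y = hmap n d r x" by blast
    show "y \<in> plus_car Y"
    proof (cases x)
      case (PB a) thus ?thesis using x cX cY nl by (auto simp: sh_lt_iff)
    next
      case (PT i S) thus ?thesis using x rl_proper[of S l "Suc i" n r d] nl r2 cardX cardY by auto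
    qed
  qed
  have inj: "inj_on (hmap n d r) (plus_car X)"
  proof (rule inj_onI)
    fix x y assume "x \<in> plus_car X" "y \<in> plus_car X" "hmap n d r x = hmap n d r y"
    have iff: "\<And>S S'. rl n d r S = rl n d r S' \<longleftrightarrow> S = S'"
      using rleq by blast
    thus "x = y" using \<open>hmap n d r x = hmap n d r y\<close> by (cases x; cases y) (simp_all add: iff)
  qed
  have fn: "\<And>x. plus_fn (hmap n d r x) = map_option (hmap n d r) (plus_fn x)"
  proof -
    fix x show "plus_fn (hmap n d r x) = map_option (hmap n d r) (plus_fn x)"
      by (cases x rule: plus_fn.cases) (auto simp: rl_trunc)
  qed
  have rel: "\<And>\<Phi>. set_fact \<Phi> \<subseteq> plus_car X \<Longrightarrow> \<Phi> \<in> plus_rels X \<longleftrightarrow> map_fact (hmap n d r) \<Phi> \<in> plus_rels Y"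
  proof
    fix \<Phi> assume sub: "set_fact \<Phi> \<subseteq> plus_car X"
    { assume "\<Phi> \<in> plus_rels X"
      then consider (a) \<phi> where "\<phi> \<in> rels_of X" "\<Phi> = map_fact PB \<phi>"
        | (b) m S \<psi> where "S \<subseteq> Collect (proper (card (ecar X)) m)" "\<psi> \<in> S" "\<Phi> = map_fact (sig S) \<psi>"
        unfolding plus_rels_def by blast
      then show "map_fact (hmap n d r) \<Phi> \<in> plus_rels Y"
      proof cases
        case a
        have "set_fact \<phi> \<subseteq> ecar X" using rels_of_car[OF EX HX a(1)] .
        hence "map_fact (sh n d) \<phi> \<in> rels_of Y" using em a(1) by blast
        moreover have "map_fact (hmap n d r) \<Phi> = map_fact PB (map_fact (sh n d) \<phi>)"
          using a(2) by (simp add: fact.map_comp comp_def)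
        ultimately show ?thesis unfolding plus_rels_def by blast
      next
        case b
        have "map_fact (hmap n d r) \<Phi> = map_fact (sig (rl n d r S)) (map_fact (sga n d) \<psi>)"
          using b(3) by (simp add: fact.map_comp comp_def hmap_sig)
        moreover have "0 < m" using b(1,2) proper_Tv0 proper_Tv_lt by blast
        hence "rl n d r S \<subseteq> Collect (proper (card (ecar Y)) m)"
          using rl_proper[of S l m n r d] b(1) cardX cardY nl r2 by auto
        moreover have "map_fact (sga n d) \<psi> \<in> rl n d r S" using b(2) by (simp add: rl_def)
        ultimately show ?thesis unfolding plus_rels_def by blast
      qed }
    { assume h: "map_fact (hmap n d r) \<Phi> \<in> plus_rels Y"
      let ?\<psi> = "map_fact proj \<Phi>"
      have psi_eq: "map_fact proj (map_fact (hmap n d r) \<Phi>) = map_fact (sga n d) ?\<psi>"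
        by (simp add: fact.map_comp comp_def)
      from h consider (a) \<phi>' where "\<phi>' \<in> rels_of Y" "map_fact (hmap n d r) \<Phi> = map_fact PB \<phi>'"
        | (b) m S' \<psi>' where "S' \<subseteq> Collect (proper (card (ecar Y)) m)" "\<psi>' \<in> S'"
             "map_fact (hmap n d r) \<Phi> = map_fact (sig S') \<psi>'"
        unfolding plus_rels_def by blast
      then show "\<Phi> \<in> plus_rels X"
      proof cases
        case a
        have allPB: "\<forall>x\<in>set_fact \<Phi>. \<exists>a. x = PB a \<and> a \<in> ecar X"
        proof
          fix x assume xin: "x \<in> set_fact \<Phi>"
          hence "hmap n d r x \<in> set_fact (map_fact PB \<phi>')" using a(2) by (metis fact.set_map imageI)
          hence "\<exists>a. hmap n d r x = PB a" by (auto simp: fact.set_map)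
          then obtain a where "x = PB a" by (cases x) auto
          thus "\<exists>a. x = PB a \<and> a \<in> ecar X" using sub xin by auto
        qed
        let ?\<phi> = "map_fact pbn \<Phi>"
        have "map_fact (PB \<circ> pbn) \<Phi> = map_fact (\<lambda>x. x) \<Phi>"
          by (rule fact.map_cong[OF refl]) (use allPB in auto)
        hence \<Phi>eq: "\<Phi> = map_fact PB ?\<phi>" by (simp add: fact.map_comp fact.map_ident)
        have s\<psi>: "set_fact ?\<phi> \<subseteq> ecar X" using allPB by (auto simp: fact.set_map)
        have "map_fact (hmap n d r) (map_fact PB ?\<phi>) = map_fact PB (map_fact (sh n d) ?\<phi>)"
          by (simp add: fact.map_comp comp_def)
        hence "map_fact PB (map_fact (sh n d) ?\<phi>) = map_fact PB \<phi>'"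
          using a(2) \<Phi>eq by simp
        hence "map_fact (sh n d) ?\<phi> = \<phi>'" using fact.inj_map[OF inj_PB] by (auto dest: injD)
        hence "?\<phi> \<in> rels_of X" using em s\<psi> a(1) by blast
        thus ?thesis using \<Phi>eq unfolding plus_rels_def by blast
      next
        case b
        have psi': "\<psi>' = map_fact (sga n d) ?\<psi>" using arg_cong[OF b(3), of "map_fact proj"] psi_eq by simp
        obtain k where k: "k > 0" "{i. Tv i \<in> set_fact \<psi>'} = {..<k}"
          using b(1,2) unfolding proper_def by blast
        have "k - 1 \<in> {i. Tv i \<in> set_fact \<psi>'}" unfolding k(2) using k(1) by simp
        hence "Tv (k-1) \<in> set_fact \<psi>'" by simp
        hence "Tv (k-1) \<in> set_fact ?\<psi>" using psi' by (simp add: fact.set_map)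
        then obtain x where x: "x \<in> set_fact \<Phi>" "proj x = Tv (k-1)" by (auto simp: fact.set_map)
        obtain T where xT: "x = PT (k-1) T" using x(2) by (cases x) auto
        have "PT (k-1) T \<in> plus_car X" using sub x(1) xT by blast
        hence Tp: "T \<subseteq> Collect (proper l k)" using cardX k by simp
        have "hmap n d r x \<in> set_fact (map_fact (sig S') \<psi>')" using x(1) b(3) by (metis fact.set_map imageI)
        hence "hmap n d r x = sig S' (proj (hmap n d r x))" by (rule sig_in_set)
        hence "PT (k-1) (rl n d r T) = PT (k-1) (trunc k S')" using xT k by simp
        hence rlT: "rl n d r T = trunc k S'" by simp
        have "\<psi>' \<in> trunc k S'" using b(2) k by (auto simp: trunc_def)
        hence "map_fact (sga n d) ?\<psi> \<in> rl n d r T" using rlT psi' by simp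
        hence psiT: "?\<psi> \<in> T" by (simp only: rlinj)
        have allsig: "\<forall>y\<in>set_fact \<Phi>. sig T (proj y) = y"
        proof
          fix y assume y: "y \<in> set_fact \<Phi>"
          show "sig T (proj y) = y"
          proof (cases y)
            case (PB a) thus ?thesis by simp
          next
            case (PT j U)
            have "hmap n d r y \<in> set_fact (map_fact (sig S') \<psi>')" using y b(3) by (metis fact.set_map imageI)
            hence "hmap n d r y = sig S' (proj (hmap n d r y))" by (rule sig_in_set)
            hence rlU: "rl n d r U = trunc (Suc j) S'" using PT by simp
            have "Tv j \<in> set_fact ?\<psi>" using y PT by (force simp: fact.set_map)
            hence "Tv j \<in> set_fact \<psi>'" using psi' by (simp add: fact.set_map)
            hence "j < k" using k by auto
            hence "trunc (Suc j) S' = trunc (Suc j) (trunc k S')" by (simp add: trunc_trunc)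
            also have "\<dots> = trunc (Suc j) (rl n d r T)" using rlT by simp
            also have "\<dots> = rl n d r (trunc (Suc j) T)" by (rule rl_trunc) simp
            finally have "rl n d r U = rl n d r (trunc (Suc j) T)" using rlU by simp
            hence "U = trunc (Suc j) T" by (rule rleq)
            thus ?thesis using PT by simp
          qed
        qed
        have "map_fact (sig T \<circ> proj) \<Phi> = map_fact (\<lambda>x. x) \<Phi>"
          by (rule fact.map_cong[OF refl]) (use allsig in auto)
        hence "\<Phi> = map_fact (sig T) ?\<psi>" by (simp add: fact.map_comp fact.map_ident)
        thus ?thesis using Tp psiT cardX unfolding plus_rels_def by blast
      qed }
  qed
  show ?thesis unfolding is_emb_def plus_def using img inj rel fn by simp
qed

definition extn :: "nat \<Rightarrow> nat \<Rightarrow> bool \<Rightarrow> estr \<Rightarrow> estr \<Rightarrow> estr" where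
  "extn n d r B0 X = \<lparr>ecar = {..<n+d} \<union> sh n d ` ecar X,
     eE = eE B0 \<union> (\<lambda>(a,b). (sh n d a, sh n d b)) ` eE X \<union> {(2, sh n d x) | x. r \<and> (0,x) \<in> eE X \<and> n \<le> x},
     eH = eH B0 \<union> (\<lambda>(a,b,c). (sh n d a, sh n d b, sh n d c)) ` eH X\<rparr>"

lemma extn_simps[simp]:
  "ecar (extn n d r B0 X) = {..<n+d} \<union> sh n d ` ecar X"
  "eE (extn n d r B0 X) = eE B0 \<union> (\<lambda>(a,b). (sh n d a, sh n d b)) ` eE X \<union> {(2, sh n d x) | x. r \<and> (0,x) \<in> eE X \<and> n \<le> x}"
  "eH (extn n d r B0 X) = eH B0 \<union> (\<lambda>(a,b,c). (sh n d a, sh n d b, sh n d c)) ` eH X"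
  by (simp_all add: extn_def)

lemma enum_init: "enumerated X \<Longrightarrow> v \<in> ecar X \<Longrightarrow> u \<le> v \<Longrightarrow> u \<in> ecar X"
  unfolding enumerated_def by auto

lemma enum_lessThan: "enumerated X \<Longrightarrow> v \<in> ecar X \<Longrightarrow> {..<v} \<subseteq> ecar X"
  using enum_init by fastforce

lemma enum_restr: "enumerated X \<Longrightarrow> v \<in> ecar X \<Longrightarrow> ecar X \<inter> {..<v} = {..<v}"
  using enum_lessThan by blast

lemma enum_E: "enumerated X \<Longrightarrow> eE X \<subseteq> ecar X \<times> ecar X"
  and enum_H: "enumerated X \<Longrightarrow> eH X \<subseteq> ecar X \<times> ecar X \<times> ecar X"
  unfolding enumerated_def by auto

lemma pull:
  assumes "n \<le> l" "set as \<subseteq> sh n d ` E" "\<forall>a\<in>set as. l + d \<le> a"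
  shows "\<exists>as0. as = map (sh n d) as0 \<and> (\<forall>x\<in>set as0. l \<le> x \<and> x \<in> E)"
proof (intro exI conjI)
  have key: "\<And>y. y \<in> set as \<Longrightarrow> y - d \<in> E \<and> l \<le> y - d \<and> sh n d (y - d) = y"
  proof -
    fix y assume y: "y \<in> set as"
    then obtain x where x: "x \<in> E" "y = sh n d x" using assms(2) by blast
    have "l + d \<le> y" using y assms(3) by blast
    hence "n \<le> x" using x assms(1) by (auto simp: sh_def split: if_splits)
    hence "y = x + d" using x by (simp add: sh_def)
    thus "y - d \<in> E \<and> l \<le> y - d \<and> sh n d (y - d) = y" using x \<open>l + d \<le> y\<close> \<open>n \<le> x\<close> by (simp add: sh_def)
  qed
  show "as = map (sh n d) (map (\<lambda>y. y - d) as)"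
    by (simp add: map_idI key)
  show "\<forall>x\<in>set (map (\<lambda>y. y - d) as). l \<le> x \<and> x \<in> E" using key by auto
qed

locale cx =
  fixes n d :: nat and r :: bool and A0 B0 :: estr
  assumes cA0: "ecar A0 = {..<n}" and enB0: "enumerated B0" and cB0: "ecar B0 = {..<n+d}"
    and rB0: "restr B0 n = A0" and r2: "r \<Longrightarrow> 0 < n \<and> n \<le> 2 \<and> 2 < n + d"
begin

lemma r2': "r \<Longrightarrow> n \<le> 2 \<and> 2 < n + d" using r2 by blast

lemma EB0: "eE B0 \<subseteq> {..<n+d} \<times> {..<n+d}" and HB0: "eH B0 \<subseteq> {..<n+d} \<times> {..<n+d} \<times> {..<n+d}"
  using enum_E[OF enB0] enum_H[OF enB0] cB0 by auto

lemma XA0: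
  assumes "init_seg A0 X"
  shows "restr X n = A0" "ecar A0 \<subseteq> ecar X"
  using assms cA0 unfolding init_seg_def by auto

lemma small_E:
  assumes "init_seg A0 X" "a < n" "b < n"
  shows "(a,b) \<in> eE B0 \<longleftrightarrow> (a,b) \<in> eE X"
proof -
  have "eE (restr B0 n) = eE (restr X n)" using XA0(1)[OF assms(1)] rB0 by simp
  thus ?thesis using assms(2,3) by (auto simp: set_eq_iff)
qed

lemma small_H:
  assumes "init_seg A0 X" "a < n" "b < n" "c < n"
  shows "(a,b,c) \<in> eH B0 \<longleftrightarrow> (a,b,c) \<in> eH X"
proof -
  have "eH (restr B0 n) = eH (restr X n)" using XA0(1)[OF assms(1)] rB0 by simp
  thus ?thesis using assms(2-4) by (auto simp: set_eq_iff)
qed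

lemma sh_lt_nd: "sh n d x < n + d \<longleftrightarrow> x < n"
  by (auto simp: sh_def)

lemma extn_emb:
  assumes X: "enumerated X" "init_seg A0 X" and sub: "set_fact \<phi> \<subseteq> ecar X"
  shows "\<phi> \<in> rels_of X \<longleftrightarrow> map_fact (sh n d) \<phi> \<in> rels_of (extn n d r B0 X)"
proof (cases \<phi>)
  case (FE a b)
  have "(sh n d a, sh n d b) \<in> eE (extn n d r B0 X) \<longleftrightarrow> (a, b) \<in> eE X"
  proof
    assume "(sh n d a, sh n d b) \<in> eE (extn n d r B0 X)"
    from this[unfolded extn_simps] consider "(sh n d a, sh n d b) \<in> eE B0"
      | "(sh n d a, sh n d b) \<in> (\<lambda>(a,b). (sh n d a, sh n d b)) ` eE X"
      | "r" "sh n d a = 2" by blast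
    thus "(a, b) \<in> eE X"
    proof cases
      case 1
      hence "a < n" "b < n" using EB0 sh_lt_nd by auto
      thus ?thesis using 1 small_E[OF X(2)] by (simp add: sh_small)
    next
      case 2 thus ?thesis by auto
    next
      case 3 thus ?thesis using r2' sh_notins by metis
    qed
  qed auto
  thus ?thesis using FE by simp
next
  case (FH a b c)
  have "(sh n d a, sh n d b, sh n d c) \<in> eH (extn n d r B0 X) \<longleftrightarrow> (a, b, c) \<in> eH X"
  proof
    assume "(sh n d a, sh n d b, sh n d c) \<in> eH (extn n d r B0 X)"
    from this[unfolded extn_simps] consider "(sh n d a, sh n d b, sh n d c) \<in> eH B0"
      | "(sh n d a, sh n d b, sh n d c) \<in> (\<lambda>(a,b,c). (sh n d a, sh n d b, sh n d c)) ` eH X" by blast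
    thus "(a, b, c) \<in> eH X"
    proof cases
      case 1
      hence "a < n" "b < n" "c < n" using HB0 sh_lt_nd by auto
      thus ?thesis using 1 small_H[OF X(2)] by (simp add: sh_small)
    next
      case 2 thus ?thesis by auto
    qed
  next
    assume "(a,b,c) \<in> eH X"
    hence "(sh n d a, sh n d b, sh n d c) \<in> (\<lambda>(a,b,c). (sh n d a, sh n d b, sh n d c)) ` eH X"
      by (rule rev_image_eqI) simp
    thus "(sh n d a, sh n d b, sh n d c) \<in> eH (extn n d r B0 X)" by simp
  qed
  thus ?thesis using FH by simp
next
  case (FL a b)
  thus ?thesis using sub by auto
qed

lemma extn_enum:
  assumes X: "enumerated X" "init_seg A0 X"
  shows "enumerated (extn n d r B0 X)"
proof -
  have nX: "{..<n} \<subseteq> ecar X" using XA0(2)[OF X(2)] cA0 by simp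
  have car: "ecar (extn n d r B0 X) = UNIV \<or> (\<exists>m. ecar (extn n d r B0 X) = {..<m})"
    using X(1) unfolding enumerated_def
  proof (elim conjE disjE exE)
    assume U: "ecar X = UNIV"
    have "\<And>y. y \<in> {..<n+d} \<union> sh n d ` UNIV"
    proof -
      fix y show "y \<in> {..<n+d} \<union> sh n d ` UNIV"
      proof (cases "y < n + d")
        case False
        hence "y = sh n d (y - d)" by (simp add: sh_def)
        thus ?thesis by blast
      qed simp
    qed
    hence "ecar (extn n d r B0 X) = UNIV" using U by (simp only: extn_simps) blast
    thus ?thesis by blast
  next
    fix m assume M: "ecar X = {..<m}"
    have "n \<le> m" using nX M by simp
    have "{..<n+d} \<union> sh n d ` {..<m} = {..<m+d}"
    proof (intro set_eqI iffI)
      fix y assume "y \<in> {..<n+d} \<union> sh n d ` {..<m}" thus "y \<in> {..<m+d}"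
        using \<open>n \<le> m\<close> by (auto simp: sh_def)
    next
      fix y assume y: "y \<in> {..<m+d}" show "y \<in> {..<n+d} \<union> sh n d ` {..<m}"
      proof (cases "y < n + d")
        case False
        hence "y = sh n d (y - d)" "y - d < m" using y by (auto simp: sh_def)
        thus ?thesis by blast
      qed simp
    qed
    hence "ecar (extn n d r B0 X) = {..<m+d}" using M by simp
    thus ?thesis by blast
  qed
  have E: "eE (extn n d r B0 X) \<subseteq> ecar (extn n d r B0 X) \<times> ecar (extn n d r B0 X)"
    using EB0 enum_E[OF X(1)] r2' by auto
  have H: "eH (extn n d r B0 X) \<subseteq> ecar (extn n d r B0 X) \<times> ecar (extn n d r B0 X) \<times> ecar (extn n d r B0 X)"
    using HB0 enum_H[OF X(1)] by auto
  show ?thesis unfolding enumerated_def using car E H by blast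
qed

lemma extn_restr:
  assumes X: "enumerated X" "init_seg A0 X"
  shows "restr (extn n d r B0 X) (n + d) = B0"
proof -
  have c: "ecar (restr (extn n d r B0 X) (n + d)) = ecar B0" using cB0 by auto
  have e: "eE (restr (extn n d r B0 X) (n + d)) = eE B0"
  proof (intro set_eqI iffI)
    fix p assume p: "p \<in> eE (restr (extn n d r B0 X) (n + d))"
    obtain a b where ab: "p = (a,b)" by force
    have lt: "a < n + d" "b < n + d" and pe: "(a,b) \<in> eE (extn n d r B0 X)" using p ab by auto
    from pe[unfolded extn_simps] consider "(a,b) \<in> eE B0"
      | x y where "(x,y) \<in> eE X" "a = sh n d x" "b = sh n d y"
      | x where "n \<le> x" "b = sh n d x" by force
    then show "p \<in> eE B0"
    proof cases
      case 1 thus ?thesis using ab by simp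
    next
      case 2
      hence "x < n" "y < n" using lt sh_lt_nd by auto
      thus ?thesis using 2 ab small_E[OF X(2)] by (simp add: sh_small)
    next
      case 3 thus ?thesis using lt by (simp add: sh_def)
    qed
  next
    fix p assume "p \<in> eE B0" thus "p \<in> eE (restr (extn n d r B0 X) (n + d))" using EB0 by auto
  qed
  have h: "eH (restr (extn n d r B0 X) (n + d)) = eH B0"
  proof (intro set_eqI iffI)
    fix p assume p: "p \<in> eH (restr (extn n d r B0 X) (n + d))"
    obtain a b c where ab: "p = (a,b,c)" by (cases p) force
    have lt: "a < n + d" "b < n + d" "c < n + d" and pe: "(a,b,c) \<in> eH (extn n d r B0 X)" using p ab by auto
    from pe[unfolded extn_simps] consider "(a,b,c) \<in> eH B0"
      | x y z where "(x,y,z) \<in> eH X" "a = sh n d x" "b = sh n d y" "c = sh n d z" by force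
    then show "p \<in> eH B0"
    proof cases
      case 1 thus ?thesis using ab by simp
    next
      case 2
      hence "x < n" "y < n" "z < n" using lt sh_lt_nd by auto
      thus ?thesis using 2 ab small_H[OF X(2)] by (simp add: sh_small)
    qed
  next
    fix p assume "p \<in> eH B0" thus "p \<in> eH (restr (extn n d r B0 X) (n + d))" using HB0 by auto
  qed
  show ?thesis using c e h by (simp add: restr_def)
qed

end

fun unsga :: "nat \<Rightarrow> nat \<Rightarrow> atom \<Rightarrow> atom" where
  "unsga n d (Bs j) = Bs (if j < n then j else j - d)" | "unsga n d (Tv i) = Tv i"

lemma unsga_eq_Tv[simp]: "unsga n d x = Tv i \<longleftrightarrow> x = Tv i" "Tv i = unsga n d x \<longleftrightarrow> x = Tv i"
  by (cases x; auto)+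

lemma unsga_Tv_iff[simp]: "Tv i \<in> unsga n d ` A \<longleftrightarrow> Tv i \<in> A"
  by (auto intro: rev_image_eqI[where x="Tv i"])

lemma interp_sga:
  assumes "\<forall>i. Tv i \<in> set_fact \<phi> \<longrightarrow> i < length as0"
  shows "map_fact (interp (map (sh n d) as0)) (map_fact (sga n d) \<phi>) = map_fact (sh n d) (map_fact (interp as0) \<phi>)"
  unfolding fact.map_comp
  apply (rule fact.map_cong[OF refl])
  subgoal for a using assms by (cases a) auto
  done

context cx begin

lemma tp_extn:
  assumes X: "enumerated X" "init_seg A0 X" and nl: "n \<le> l" and ne: "as0 \<noteq> []"
    and as0: "\<forall>x\<in>set as0. l \<le> x \<and> x \<in> ecar X"
  shows "tp (extn n d r B0 X) (l + d) (map (sh n d) as0) = rl n d r (tp X l as0)"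
proof -
  let ?Y = "extn n d r B0 X"
  let ?L = "length as0"
  have x0: "as0 ! 0 \<in> set as0" using ne by simp
  have s0: "l \<le> as0 ! 0" "as0 ! 0 \<in> ecar X" using as0 x0 by auto
  have lX: "{..<l} \<subseteq> ecar X" using enum_lessThan[OF X(1) s0(2)] s0(1) by auto
  have setX: "\<And>\<phi>. proper l ?L \<phi> \<Longrightarrow> set_fact (map_fact (interp as0) \<phi>) \<subseteq> ecar X"
  proof
    fix \<phi> y assume p: "proper l ?L \<phi>" and y: "y \<in> set_fact (map_fact (interp as0) \<phi>)"
    then obtain a where a: "a \<in> set_fact \<phi>" "y = interp as0 a" by (auto simp: fact.set_map)
    show "y \<in> ecar X"
    proof (cases a)
      case (Bs j) thus ?thesis using a proper_Bs_lt[OF p] lX by auto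
    next
      case (Tv i) thus ?thesis using a proper_Tv_lt[OF p] as0 nth_mem by auto
    qed
  qed
  have e1: "{i. i = 0} = {..<Suc 0}" by auto
  have L0: "0 < ?L" using ne by simp
  show ?thesis
  proof (intro set_eqI iffI)
    fix \<phi> assume "\<phi> \<in> rl n d r (tp X l as0)"
    then consider (a) \<phi>0 where "\<phi>0 \<in> tp X l as0" "\<phi> = map_fact (sga n d) \<phi>0"
      | (b) "\<phi> \<in> extra n d r (tp X l as0)"
      unfolding rl_def by blast
    then show "\<phi> \<in> tp ?Y (l + d) (map (sh n d) as0)"
    proof cases
      case a
      have p0: "proper l ?L \<phi>0" and r0: "map_fact (interp as0) \<phi>0 \<in> rels_of X"
        using a(1) by (auto simp: tp_def)
      have "proper (l+d) ?L \<phi>" using proper_sga[OF p0 nl] a(2) by simp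
      moreover have "map_fact (interp (map (sh n d) as0)) \<phi> = map_fact (sh n d) (map_fact (interp as0) \<phi>0)"
        using a(2) interp_sga proper_Tv_lt[OF p0] by blast
      moreover have "map_fact (sh n d) (map_fact (interp as0) \<phi>0) \<in> rels_of ?Y"
        using extn_emb[OF X setX[OF p0]] r0 by blast
      ultimately show ?thesis by (simp add: tp_def)
    next
      case b
      from b consider (fl) j where "n \<le> j" "j < n + d" "\<phi> = FL (Bs j) (Tv 0)"
          | (fe) "r" "FE (Bs 0) (Tv 0) \<in> tp X l as0" "\<phi> = FE (Bs 2) (Tv 0)"
        unfolding extra_def by (auto split: if_splits)
      then show ?thesis
      proof cases
        case fl
        have "proper (l+d) ?L \<phi>" using fl nl L0 unfolding proper_def by (auto simp: e1)
        moreover have "j \<le> sh n d (as0 ! 0)" using fl s0 nl by (simp add: sh_def)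
        ultimately show ?thesis using fl s0 ne by (simp add: tp_def)
      next
        case fe
        have "(0, as0 ! 0) \<in> eE X" using fe(2) by (simp add: tp_def)
        hence "(2, sh n d (as0 ! 0)) \<in> eE ?Y" using fe(1) s0 nl by auto
        moreover have "proper (l+d) ?L \<phi>" using fe r2 nl L0 unfolding proper_def by (auto simp: e1)
        ultimately show ?thesis using fe(3) ne by (simp add: tp_def)
      qed
    qed
  next
    fix \<phi> assume "\<phi> \<in> tp ?Y (l + d) (map (sh n d) as0)"
    hence p: "proper (l+d) ?L \<phi>" and rY: "map_fact (interp (map (sh n d) as0)) \<phi> \<in> rels_of ?Y"
      by (auto simp: tp_def)
    let ?ia = "interp (map (sh n d) as0)"
    have Tvbig: "\<And>i. Tv i \<in> set_fact \<phi> \<Longrightarrow> n + d \<le> ?ia (Tv i) \<and> ?ia (Tv i) = sh n d (as0 ! i)"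
    proof -
      fix i assume "Tv i \<in> set_fact \<phi>"
      hence i: "i < ?L" using proper_Tv_lt[OF p] by simp
      hence "as0 ! i \<in> set as0" by simp
      hence "l \<le> as0 ! i" using as0 by blast
      thus "n + d \<le> ?ia (Tv i) \<and> ?ia (Tv i) = sh n d (as0 ! i)" using i nl by (simp add: sh_def)
    qed
    have T0: "Tv 0 \<in> set_fact \<phi>" by (rule proper_Tv0[OF p])
    show "\<phi> \<in> rl n d r (tp X l as0)"
    proof (cases "\<exists>j. n \<le> j \<and> j < n + d \<and> Bs j \<in> set_fact \<phi>")
      case False
      let ?\<phi>0 = "map_fact (unsga n d) \<phi>"
      have "map_fact (sga n d \<circ> unsga n d) \<phi> = map_fact (\<lambda>x. x) \<phi>"
      proof (rule fact.map_cong[OF refl])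
        fix a assume a: "a \<in> set_fact \<phi>"
        show "(sga n d \<circ> unsga n d) a = a"
        proof (cases a)
          case (Bs j)
          hence "j < n \<or> n + d \<le> j" using a False by (metis not_le)
          thus ?thesis using Bs by (auto simp: sh_def)
        qed simp
      qed
      hence id: "map_fact (sga n d) ?\<phi>0 = \<phi>" by (simp add: fact.map_comp fact.map_ident)
      have p0: "proper l ?L ?\<phi>0"
        unfolding proper_def fact.set_map
      proof (intro conjI)
        show "unsga n d ` set_fact \<phi> \<subseteq> Bs ` {..<l} \<union> Tv ` {..<?L}"
        proof
          fix y assume "y \<in> unsga n d ` set_fact \<phi>"
          then obtain a where a: "a \<in> set_fact \<phi>" "y = unsga n d a" by blast
          show "y \<in> Bs ` {..<l} \<union> Tv ` {..<?L}"
          proof (cases a)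
            case (Bs j)
            have "j < l + d" using proper_Bs_lt[OF p] a Bs by simp
            moreover have "j < n \<or> n + d \<le> j" using a Bs False by (metis not_le)
            ultimately show ?thesis using a Bs False nl by (auto simp: image_iff)
          next
            case (Tv i) thus ?thesis using a proper_Tv_lt[OF p] by auto
          qed
        qed
        obtain j where "Bs j \<in> set_fact \<phi>" using p unfolding proper_def by blast
        hence "unsga n d (Bs j) \<in> unsga n d ` set_fact \<phi>" by blast
        thus "\<exists>j. Bs j \<in> unsga n d ` set_fact \<phi>" by (metis unsga.simps(1))
        show "\<exists>k>0. {i. Tv i \<in> unsga n d ` set_fact \<phi>} = {..<k}" using p unfolding proper_def by simp
      qed
      have "map_fact (sh n d) (map_fact (interp as0) ?\<phi>0) \<in> rels_of ?Y"
        using rY id interp_sga[of ?\<phi>0 as0 n d] proper_Tv_lt[OF p0] by simp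
      hence "map_fact (interp as0) ?\<phi>0 \<in> rels_of X" using extn_emb[OF X setX[OF p0]] by blast
      hence "?\<phi>0 \<in> tp X l as0" using p0 by (simp add: tp_def)
      thus ?thesis using id unfolding rl_def by (metis UnI1 imageI)
    next
      case True
      then obtain j0 where j0: "n \<le> j0" "j0 < n + d" "Bs j0 \<in> set_fact \<phi>" by blast
      have "\<phi> \<in> extra n d r (tp X l as0)"
      proof (cases \<phi>)
        case (FE a b)
        have ab: "(a = Tv 0 \<and> b = Bs j0) \<or> (a = Bs j0 \<and> b = Tv 0)" using T0 j0(3) FE by auto
        have mem: "(?ia a, ?ia b) \<in> eE ?Y" using rY FE by simp
        from mem[unfolded extn_simps] consider "(?ia a, ?ia b) \<in> eE B0"
          | x y where "(?ia a, ?ia b) = (sh n d x, sh n d y)"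
          | x where "r" "(0,x) \<in> eE X" "n \<le> x" "?ia a = 2" "?ia b = sh n d x"
          by fastforce
        thus ?thesis
        proof cases
          case 1
          hence "?ia a < n + d" "?ia b < n + d" using EB0 by auto
          thus ?thesis using ab Tvbig[OF T0] by auto
        next
          case 2
          hence "j0 = sh n d x \<or> j0 = sh n d y" using ab by auto
          thus ?thesis using j0 sh_notins by blast
        next
          case 3
          have "2 < n + d" using r2 3(1) by blast
          hence "a \<noteq> Tv 0" using 3(4) Tvbig[OF T0] by auto
          hence a2: "a = Bs 2" "b = Tv 0" using ab 3(4) by auto
          hence "x = as0 ! 0" using 3(5) Tvbig[OF T0] by simp
          hence "(0, as0 ! 0) \<in> eE X" using 3(2) by simp
          moreover have "proper l ?L (FE (Bs 0) (Tv 0))" using r2 3(1) nl L0 unfolding proper_def by (auto simp: e1)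
          ultimately have "FE (Bs 0) (Tv 0) \<in> tp X l as0" by (simp add: tp_def)
          thus ?thesis using 3(1) FE a2 by (simp add: extra_def)
        qed
      next
        case (FH a b c)
        have mem: "(?ia a, ?ia b, ?ia c) \<in> eH ?Y" using rY FH by simp
        have tv: "Tv 0 \<in> {a, b, c}" and bj: "Bs j0 \<in> {a, b, c}" using T0 j0(3) FH by auto
        from mem[unfolded extn_simps] consider "(?ia a, ?ia b, ?ia c) \<in> eH B0"
          | x y z where "(?ia a, ?ia b, ?ia c) = (sh n d x, sh n d y, sh n d z)"
          by fastforce
        thus ?thesis
        proof cases
          case 1
          hence "?ia a < n + d" "?ia b < n + d" "?ia c < n + d" using HB0 by auto
          thus ?thesis using tv Tvbig[OF T0] by auto
        next
          case 2
          hence "j0 = sh n d x \<or> j0 = sh n d y \<or> j0 = sh n d z" using bj by auto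
          thus ?thesis using j0 sh_notins by blast
        qed
      next
        case (FL a b)
        have ab: "(a = Tv 0 \<and> b = Bs j0) \<or> (a = Bs j0 \<and> b = Tv 0)" using T0 j0(3) FL by auto
        have "?ia a \<le> ?ia b" using rY FL by simp
        hence "a = Bs j0 \<and> b = Tv 0" using ab Tvbig[OF T0] j0 by auto
        thus ?thesis using FL j0 by (auto simp: extra_def)
      qed
      thus ?thesis unfolding rl_def by blast
    qed
  qed
qed

end

context cx begin

lemma restr_small:
  assumes X: "enumerated X" "init_seg A0 X" and v: "v \<le> n"
  shows "restr (extn n d r B0 X) v = restr X v"
proof -
  have "restr (extn n d r B0 X) v = restr (restr (extn n d r B0 X) (n+d)) v" using v by (simp add: restr_restr)
  also have "\<dots> = restr B0 v" using extn_restr[OF X] by simp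
  also have "\<dots> = restr (restr B0 n) v" using v by (simp add: restr_restr)
  also have "\<dots> = restr (restr X n) v" using rB0 XA0(1)[OF X(2)] by simp
  also have "\<dots> = restr X v" using v by (simp add: restr_restr)
  finally show ?thesis .
qed

lemma tp_in_plus: "as \<noteq> [] \<Longrightarrow> ecar Z = {..<v} \<Longrightarrow> PT (length as - 1) (tp Y v as) \<in> plus_car Z"
  by (auto simp: tp_def)

lemma trp_gen:
  assumes P: "\<And>X. enumerated X \<Longrightarrow> P X \<Longrightarrow> init_seg A0 X \<Longrightarrow> P (extn n d r B0 X)"
  shows "trp P A0 B0 (hmap n d r)"
  unfolding trp_def
proof (intro conjI allI impI)
  show "is_emb (plus A0) (plus B0) (hmap n d r)"
  proof (rule plus_emb[where l=n])
    have eA: "eE A0 = eE B0 \<inter> ({..<n} \<times> {..<n})" "eH A0 = eH B0 \<inter> ({..<n} \<times> {..<n} \<times> {..<n})"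
      using rB0 by auto
    show "ecar A0 = {..<n}" by (rule cA0)
    show "eE A0 \<subseteq> ecar A0 \<times> ecar A0" using eA cA0 by auto
    show "eH A0 \<subseteq> ecar A0 \<times> ecar A0 \<times> ecar A0" using eA cA0 by auto
    show "ecar B0 = {..<n + d}" by (rule cB0)
    show "n \<le> n" by simp
    show "r \<Longrightarrow> n \<le> 2 \<and> 2 < n + d" using r2 by blast
    fix \<phi> assume "set_fact \<phi> \<subseteq> ecar A0"
    hence s: "set_fact \<phi> \<subseteq> {..<n}" using cA0 by simp
    have "map_fact (sh n d) \<phi> = map_fact (\<lambda>x. x) \<phi>"
      by (rule fact.map_cong[OF refl]) (use s in \<open>auto simp: sh_small\<close>)
    hence "map_fact (sh n d) \<phi> = \<phi>" by (simp add: fact.map_ident)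
    moreover have "rels_of A0 = {\<phi> \<in> rels_of B0. set_fact \<phi> \<subseteq> {..<n}}" using rels_restr[of B0 n] rB0 by simp
    ultimately show "\<phi> \<in> rels_of A0 \<longleftrightarrow> map_fact (sh n d) \<phi> \<in> rels_of B0" using s by auto
  qed
next
  fix A' assume A': "enumerated A' \<and> P A' \<and> init_seg A0 A'"
  hence X: "enumerated A'" "init_seg A0 A'" and PA: "P A'" by auto
  let ?Y = "extn n d r B0 A'"
  have enY: "enumerated ?Y" by (rule extn_enum[OF X])
  have cardB0: "card (ecar B0) = n + d" using cB0 by simp
  have cardA0: "card (ecar A0) = n" using cA0 by simp
  have emb: "emb_e A' ?Y (sh n d)"
    unfolding emb_e_def using extn_emb[OF X] by (auto simp: inj_on_def)
  have hv: "\<forall>v\<in>ecar A'. \<exists>hv. is_emb (plus (restr A' v)) (plus (restr ?Y (sh n d v))) hv \<and>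
        (\<forall>as. as \<noteq> [] \<and> sorted_wrt (<) as \<and> set as \<subseteq> sh n d ` ecar A' \<and> (\<forall>a\<in>set as. sh n d v \<le> a)
           \<longrightarrow> PT (length as - 1) (tp ?Y (sh n d v) as) \<in> hv ` plus_car (restr A' v))"
  proof
    fix v assume v: "v \<in> ecar A'"
    have cv: "ecar (restr A' v) = {..<v}" using enum_restr[OF X(1) v] by simp
    show "\<exists>hv. is_emb (plus (restr A' v)) (plus (restr ?Y (sh n d v))) hv \<and>
        (\<forall>as. as \<noteq> [] \<and> sorted_wrt (<) as \<and> set as \<subseteq> sh n d ` ecar A' \<and> (\<forall>a\<in>set as. sh n d v \<le> a)
           \<longrightarrow> PT (length as - 1) (tp ?Y (sh n d v) as) \<in> hv ` plus_car (restr A' v))"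
    proof (cases "v < n")
      case True
      have rs: "restr ?Y (sh n d v) = restr A' v" using restr_small[OF X] True by (simp add: sh_small)
      show ?thesis
      proof (intro exI[of _ id] conjI allI impI)
        show "is_emb (plus (restr A' v)) (plus (restr ?Y (sh n d v))) id" using rs by (simp add: is_emb_id)
        fix as assume "as \<noteq> [] \<and> sorted_wrt (<) as \<and> set as \<subseteq> sh n d ` ecar A' \<and> (\<forall>a\<in>set as. sh n d v \<le> a)"
        thus "PT (length as - 1) (tp ?Y (sh n d v) as) \<in> id ` plus_car (restr A' v)"
          using tp_in_plus[OF _ cv] True by (simp add: sh_small)
      qed
    next
      case False
      hence nv: "n \<le> v" by simp
      have shv: "sh n d v = v + d" using nv by (simp add: sh_def)
      have vY: "v + d \<in> ecar ?Y" using v shv by (metis UnI2 extn_simps(1) imageI)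
      have cY: "ecar (restr ?Y (v + d)) = {..<v + d}" using enum_restr[OF enY vY] by simp
      have isem: "is_emb (plus (restr A' v)) (plus (restr ?Y (v + d))) (hmap n d r)"
      proof (rule plus_emb[where l=v])
        show "ecar (restr A' v) = {..<v}" by (rule cv)
        show "eE (restr A' v) \<subseteq> ecar (restr A' v) \<times> ecar (restr A' v)" using enum_E[OF X(1)] by auto
        show "eH (restr A' v) \<subseteq> ecar (restr A' v) \<times> ecar (restr A' v) \<times> ecar (restr A' v)"
          using enum_H[OF X(1)] by auto
        show "ecar (restr ?Y (v + d)) = {..<v + d}" by (rule cY)
        show "n \<le> v" by (rule nv)
        show "r \<Longrightarrow> n \<le> 2 \<and> 2 < n + d" using r2 by blast
        fix \<phi> assume "set_fact \<phi> \<subseteq> ecar (restr A' v)"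
        hence s: "set_fact \<phi> \<subseteq> {..<v}" using cv by simp
        hence sA: "set_fact \<phi> \<subseteq> ecar A'" using enum_lessThan[OF X(1) v] by blast
        have s2: "set_fact (map_fact (sh n d) \<phi>) \<subseteq> {..<v+d}" using s nv by (auto simp: fact.set_map sh_lt_iff)
        show "\<phi> \<in> rels_of (restr A' v) \<longleftrightarrow> map_fact (sh n d) \<phi> \<in> rels_of (restr ?Y (v + d))"
          unfolding rels_restr using s s2 extn_emb[OF X sA] by auto
      qed
      show ?thesis
      proof (intro exI[of _ "hmap n d r"] conjI allI impI)
        show "is_emb (plus (restr A' v)) (plus (restr ?Y (sh n d v))) (hmap n d r)" using isem shv by simp
        fix as assume as: "as \<noteq> [] \<and> sorted_wrt (<) as \<and> set as \<subseteq> sh n d ` ecar A' \<and> (\<forall>a\<in>set as. sh n d v \<le> a)"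
        then obtain as0 where as0: "as = map (sh n d) as0" "\<forall>x\<in>set as0. v \<le> x \<and> x \<in> ecar A'"
          using pull[OF nv, where as=as and d=d and E="ecar A'"] shv by auto
        have ne0: "as0 \<noteq> []" using as as0 by auto
        have "tp ?Y (sh n d v) as = rl n d r (tp A' v as0)" using tp_extn[OF X nv ne0 as0(2)] as0(1) shv by simp
        moreover have "PT (length as0 - 1) (tp A' v as0) \<in> plus_car (restr A' v)" using tp_in_plus[OF ne0 cv] .
        ultimately show "PT (length as - 1) (tp ?Y (sh n d v) as) \<in> hmap n d r ` plus_car (restr A' v)"
          using as0(1) by (metis hmap.simps(2) image_eqI length_map)
      qed
    qed
  qed
  show "\<exists>B' g. enumerated B' \<and> P B' \<and> init_seg B0 B' \<and> tr_emb A' B' g \<and>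
           (\<forall>a\<in>ecar A0. PB (g a) = hmap n d r (PB a)) \<and>
           (\<forall>as. as \<noteq> [] \<and> sorted_wrt (<) as \<and> set as \<subseteq> g ` ecar A' \<and>
                 (\<forall>a\<in>set as. card (ecar B0) \<le> a)
              \<longrightarrow> PT (length as - 1) (tp B' (card (ecar B0)) as) \<in> hmap n d r ` plus_car A0)"
  proof (intro exI[of _ ?Y] exI[of _ "sh n d"] conjI allI impI)
    show "enumerated ?Y" by (rule enY)
    show "P ?Y" using P X PA by blast
    show "init_seg B0 ?Y" unfolding init_seg_def using cB0 extn_restr[OF X] cardB0 by auto
    show "tr_emb A' ?Y (sh n d)" unfolding tr_emb_def using emb hv by blast
    show "\<forall>a\<in>ecar A0. PB (sh n d a) = hmap n d r (PB a)" by simp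
    fix as assume as: "as \<noteq> [] \<and> sorted_wrt (<) as \<and> set as \<subseteq> sh n d ` ecar A' \<and> (\<forall>a\<in>set as. card (ecar B0) \<le> a)"
    then obtain as0 where as0: "as = map (sh n d) as0" "\<forall>x\<in>set as0. n \<le> x \<and> x \<in> ecar A'"
      using pull[where n=n and l=n and as=as and d=d and E="ecar A'"] cardB0 by auto
    have ne0: "as0 \<noteq> []" using as as0 by auto
    have "tp ?Y (card (ecar B0)) as = rl n d r (tp A' n as0)" using tp_extn[OF X _ ne0 as0(2)] as0(1) cardB0 by simp
    moreover have "PT (length as0 - 1) (tp A' n as0) \<in> plus_car A0" using tp_in_plus[OF ne0 cA0] .
    ultimately show "PT (length as - 1) (tp ?Y (card (ecar B0)) as) \<in> hmap n d r ` plus_car A0"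
      using as0(1) by (metis hmap.simps(2) image_eqI length_map)
  qed
qed

end

definition A1 :: estr where "A1 = \<lparr>ecar = {..<1}, eE = {}, eH = {}\<rparr>"
definition B1 :: estr where "B1 = \<lparr>ecar = {..<2}, eE = {}, eH = {}\<rparr>"
definition B2 :: estr where "B2 = \<lparr>ecar = {..<3}, eE = {(2,1)}, eH = {}\<rparr>"
definition W :: estr where "W = \<lparr>ecar = {..<4}, eE = {(0,2),(0,3)}, eH = {(1,2,3)}\<rparr>"

lemma monoD:
  assumes "mono_EH F X m"
  shows "(m 1, m 0) \<in> eE X" "(m 1, m 2) \<in> eE X" "(m 1, m 3) \<in> eE X" "(m 0, m 2, m 3) \<in> eH X"
    "m 0 \<noteq> m 2" "m 0 \<noteq> m 3" "m 2 \<noteq> m 3" "m 1 \<noteq> m 0" "m 1 \<noteq> m 2" "m 1 \<noteq> m 3"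
  using assms unfolding mono_EH_def F_def inj_on_def by auto

lemma monoI:
  assumes "(m 1, m 0) \<in> eE X" "(m 1, m 2) \<in> eE X" "(m 1, m 3) \<in> eE X" "(m 0, m 2, m 3) \<in> eH X"
    "m 0 \<noteq> m 2" "m 0 \<noteq> m 3" "m 2 \<noteq> m 3" "m 1 \<noteq> m 0" "m 1 \<noteq> m 2" "m 1 \<noteq> m 3"
    "enumerated X"
  shows "mono_EH F X m"
proof -
  have "m 0 \<in> ecar X" "m 1 \<in> ecar X" "m 2 \<in> ecar X" "m 3 \<in> ecar X"
    using assms(1-3) enum_E[OF assms(11)] by auto
  thus ?thesis using assms unfolding mono_EH_def F_def inj_on_def by auto
qed

lemma enum_lit: "enumerated \<lparr>ecar = {..<k}, eE = E, eH = H\<rparr> \<longleftrightarrow>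
   E \<subseteq> {..<k} \<times> {..<k} \<and> H \<subseteq> {..<k} \<times> {..<k} \<times> {..<k}"
  unfolding enumerated_def by auto

lemma A1K: "A1 \<in> K"
proof -
  have "\<not> mono_EH F A1 m" for m
  proof
    assume "mono_EH F A1 m"
    from monoD[OF this] show False by (auto simp: A1_def)
  qed
  thus ?thesis unfolding K_def by (auto simp: A1_def enumerated_def)
qed
lemma B1K: "B1 \<in> K"
proof -
  have "\<not> mono_EH F B1 m" for m
  proof
    assume "mono_EH F B1 m"
    from monoD[OF this] show False by (auto simp: B1_def)
  qed
  thus ?thesis unfolding K_def by (auto simp: B1_def enumerated_def)
qed
lemma B2K: "B2 \<in> K"
proof -
  have "\<not> mono_EH F B2 m" for m
  proof
    assume "mono_EH F B2 m"
    from monoD[OF this] show False by (auto simp: B2_def)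
  qed
  thus ?thesis unfolding K_def by (auto simp: B2_def enumerated_def)
qed
lemma WK: "W \<in> K"
proof -
  have "\<not> mono_EH F W m" for m
  proof
    assume "mono_EH F W m"
    from monoD[OF this] show False by (auto simp: W_def)
  qed
  thus ?thesis unfolding K_def by (auto simp: W_def enumerated_def)
qed

lemma cx1: "cx 1 1 False A1 B1"
  by unfold_locales (auto simp: A1_def B1_def enum_lit restr_def)
lemma cx2: "cx 1 2 True A1 B2"
  by unfold_locales (auto simp: A1_def B2_def enum_lit restr_def)
lemma cx3: "cx 2 1 True B1 B2"
  by unfold_locales (auto simp: B1_def B2_def enum_lit restr_def)

definition unsh :: "nat \<Rightarrow> nat \<Rightarrow> nat \<Rightarrow> nat" where
  "unsh n d y = (if y < n then y else y - d)"

lemma unsh_sh[simp]: "unsh n d (sh n d x) = x"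
  by (auto simp: unsh_def sh_def)

lemma K_f:
  assumes X: "enumerated X" "X \<in> K" "init_seg A1 X"
  shows "extn 1 1 False B1 X \<in> K"
proof -
  let ?Y = "extn 1 1 False B1 X"
  have enY: "enumerated ?Y" using cx.extn_enum[OF cx1 X(1) X(3)] .
  have "\<not> mono_EH F ?Y m" for m
  proof
    assume mo: "mono_EH F ?Y m"
    have EY: "\<And>p q. (p,q) \<in> eE ?Y \<Longrightarrow> \<exists>a b. (a,b) \<in> eE X \<and> p = sh 1 1 a \<and> q = sh 1 1 b"
      by (auto simp: B1_def)
    have HY: "\<And>p q s. (p,q,s) \<in> eH ?Y \<Longrightarrow> \<exists>a b c. (a,b,c) \<in> eH X \<and> p = sh 1 1 a \<and> q = sh 1 1 b \<and> s = sh 1 1 c"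
      by (auto simp: B1_def)
    note M = monoD[OF mo]
    obtain a1 a0 where 1: "(a1,a0) \<in> eE X" "m 1 = sh 1 1 a1" "m 0 = sh 1 1 a0" using EY[OF M(1)] by blast
    obtain b1 a2 where 2: "(b1,a2) \<in> eE X" "m 1 = sh 1 1 b1" "m 2 = sh 1 1 a2" using EY[OF M(2)] by blast
    obtain c1 a3 where 3: "(c1,a3) \<in> eE X" "m 1 = sh 1 1 c1" "m 3 = sh 1 1 a3" using EY[OF M(3)] by blast
    obtain x y z where 4: "(x,y,z) \<in> eH X" "m 0 = sh 1 1 x" "m 2 = sh 1 1 y" "m 3 = sh 1 1 z" using HY[OF M(4)] by blast
    have "mono_EH F X (\<lambda>k. unsh 1 1 (m k))"
      by (rule monoI) (use 1 2 3 4 M X(1) in auto)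
    thus False using X(2) unfolding K_def by blast
  qed
  thus ?thesis using enY unfolding K_def by auto
qed

lemma K_f':
  assumes X: "enumerated X" "X \<in> K" "init_seg A1 X"
  shows "extn 1 2 True B2 X \<in> K"
proof -
  let ?Y = "extn 1 2 True B2 X"
  have enY: "enumerated ?Y" using cx.extn_enum[OF cx2 X(1) X(3)] .
  have "\<not> mono_EH F ?Y m" for m
  proof
    assume mo: "mono_EH F ?Y m"
    note M = monoD[OF mo]
    have HY: "\<And>p q s. (p,q,s) \<in> eH ?Y \<Longrightarrow> \<exists>a b c. (a,b,c) \<in> eH X \<and> p = sh 1 2 a \<and> q = sh 1 2 b \<and> s = sh 1 2 c"
      by (auto simp: B2_def)
    obtain a0 a2 a3 where H: "(a0,a2,a3) \<in> eH X" "m 0 = sh 1 2 a0" "m 2 = sh 1 2 a2" "m 3 = sh 1 2 a3"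
      using HY[OF M(4)] by blast
    have EY: "\<And>p q. (p,q) \<in> eE ?Y \<Longrightarrow> (p = 2 \<and> q = 1) \<or> (\<exists>a b. (a,b) \<in> eE X \<and> p = sh 1 2 a \<and> q = sh 1 2 b)
       \<or> (\<exists>x. p = 2 \<and> q = sh 1 2 x \<and> (0,x) \<in> eE X \<and> 1 \<le> x)"
      by (auto simp: B2_def)
    have sh2: "\<And>x. sh 1 2 x \<noteq> 2" "\<And>x. sh 1 2 x \<noteq> 1" by (auto simp: sh_def)
    have dist: "a0 \<noteq> a2" "a0 \<noteq> a3" "a2 \<noteq> a3" using M(5-7) H by auto
    show False
    proof (cases "\<exists>c. m 1 = sh 1 2 c")
      case True
      then obtain c where c: "m 1 = sh 1 2 c" by blast
      have E: "(c, a) \<in> eE X" if "(m 1, sh 1 2 a) \<in> eE ?Y" for a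
        using EY[OF that] c sh2 by auto
      have e0: "(c, a0) \<in> eE X" using M(1) unfolding H(2) by (rule E)
      have e2: "(c, a2) \<in> eE X" using M(2) unfolding H(3) by (rule E)
      have e3: "(c, a3) \<in> eE X" using M(3) unfolding H(4) by (rule E)
      have d1: "c \<noteq> a0" "c \<noteq> a2" "c \<noteq> a3" using M(8-10) H c by auto
      have "mono_EH F X (\<lambda>k. if k = 1 then c else unsh 1 2 (m k))"
        by (rule monoI) (use e0 e2 e3 d1 dist H X(1) in auto)
      thus False using X(2) unfolding K_def by blast
    next
      case False
      have m12: "m 1 = 2" using EY[OF M(1)] False by auto
      have E: "(0, a) \<in> eE X \<and> 1 \<le> a" if "(m 1, sh 1 2 a) \<in> eE ?Y" for a
        using EY[OF that] m12 sh2 False by auto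
      have e0: "(0, a0) \<in> eE X" "1 \<le> a0" using E[of a0] M(1) unfolding H(2) by blast+
      have e2: "(0, a2) \<in> eE X" "1 \<le> a2" using E[of a2] M(2) unfolding H(3) by blast+
      have e3: "(0, a3) \<in> eE X" "1 \<le> a3" using E[of a3] M(3) unfolding H(4) by blast+
      have "mono_EH F X (\<lambda>k. if k = 1 then 0 else unsh 1 2 (m k))"
        by (rule monoI) (use e0 e2 e3 dist H X(1) in auto)
      thus False using X(2) unfolding K_def by blast
    qed
  qed
  thus ?thesis using enY unfolding K_def by auto
qed

lemma trp_f: "trp (\<lambda>X. X \<in> K) A1 B1 (hmap 1 1 False)"
  by (rule cx.trp_gen[OF cx1]) (rule K_f)
lemma trp_f': "trp (\<lambda>X. X \<in> K) A1 B2 (hmap 1 2 True)"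
  by (rule cx.trp_gen[OF cx2]) (rule K_f')
lemma trp_g: "trp (\<lambda>_. True) B1 B2 (hmap 2 1 True)"
  by (rule cx.trp_gen[OF cx3]) simp

lemma sga_id:
  assumes "\<forall>j. Bs j \<in> set_fact \<phi> \<longrightarrow> j < n"
  shows "map_fact (sga n d) \<phi> = \<phi>"
proof -
  have "map_fact (sga n d) \<phi> = map_fact (\<lambda>x. x) \<phi>"
  proof (rule fact.map_cong[OF refl])
    fix a assume a: "a \<in> set_fact \<phi>"
    show "sga n d a = a"
    proof (cases a)
      case (Bs j) thus ?thesis using assms a by (simp add: sh_def)
    qed simp
  qed
  thus ?thesis by (simp add: fact.map_ident)
qed

lemma img_sga_id: "\<forall>\<phi>\<in>S. \<forall>j. Bs j \<in> set_fact \<phi> \<longrightarrow> j < n \<Longrightarrow> map_fact (sga n d) ` S = S"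
proof -
  assume S: "\<forall>\<phi>\<in>S. \<forall>j. Bs j \<in> set_fact \<phi> \<longrightarrow> j < n"
  have "map_fact (sga n d) ` S = (\<lambda>x. x) ` S"
    by (rule image_cong[OF refl]) (use S sga_id in blast)
  thus ?thesis by simp
qed

lemma comp_fg: "\<forall>x\<in>plus_car A1. hmap 2 1 True (hmap 1 1 False x) = hmap 1 2 True x"
proof
  fix x assume x: "x \<in> plus_car A1"
  show "hmap 2 1 True (hmap 1 1 False x) = hmap 1 2 True x"
  proof (cases x)
    case (PB a) thus ?thesis using x by (simp add: A1_def sh_def)
  next
    case (PT i S)
    hence S: "S \<subseteq> Collect (proper 1 (Suc i))" using x by (simp add: A1_def)
    have b1: "\<forall>\<phi>\<in>S. \<forall>j. Bs j \<in> set_fact \<phi> \<longrightarrow> j < 1" using S proper_Bs_lt by blast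
    have b2: "\<forall>\<phi>\<in>S \<union> {FL (Bs 1) (Tv 0)}. \<forall>j. Bs j \<in> set_fact \<phi> \<longrightarrow> j < 2" using b1 by fastforce
    have i1: "map_fact (sga 1 1) ` S = S" "map_fact (sga 1 2) ` S = S"
      using img_sga_id[OF b1] by simp_all
    have i2: "map_fact (sga 2 1) ` (S \<union> {FL (Bs 1) (Tv 0)}) = S \<union> {FL (Bs 1) (Tv 0)}"
      using img_sga_id[OF b2] by simp
    have e1: "{FL (Bs j) (Tv 0) |j. 1 \<le> j \<and> j < 1 + 1} = {FL (Bs 1) (Tv 0)}" by auto
    have e2: "{FL (Bs j) (Tv 0) |j. 2 \<le> j \<and> j < 2 + 1} = {FL (Bs 2) (Tv 0)}" by auto
    have e3: "{FL (Bs j) (Tv 0) |j. 1 \<le> j \<and> j < 1 + 2} = {FL (Bs 1) (Tv 0), FL (Bs 2) (Tv 0)}" by auto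
    have r11: "rl 1 1 False S = S \<union> {FL (Bs 1) (Tv 0)}"
      unfolding rl_def extra_def i1 e1 by simp
    have "rl 2 1 True (rl 1 1 False S) = rl 1 2 True S"
      unfolding r11 unfolding rl_def i2 i1 unfolding extra_def e2 e3 by auto
    thus ?thesis using PT by simp
  qed
qed

lemma proper_mono: "proper l m \<phi> \<Longrightarrow> l \<le> l' \<Longrightarrow> proper l' m \<phi>"
  unfolding proper_def by fastforce

lemma proper_trunc: "proper l m \<phi> \<Longrightarrow> (\<forall>i. Tv i \<in> set_fact \<phi> \<longrightarrow> i < k) \<Longrightarrow> proper l k \<phi>"
  unfolding proper_def by blast

lemma proper_FE: "j < l \<Longrightarrow> 0 < m \<Longrightarrow> proper l m (FE (Bs j) (Tv 0))"
  and proper_FL: "j < l \<Longrightarrow> 0 < m \<Longrightarrow> proper l m (FL (Bs j) (Tv 0))"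
  unfolding proper_def by (auto intro!: exI[of _ 1])

lemma Wtype:
  assumes x: "x = 2 \<or> x = 3" and p: "proper 2 1 \<phi>"
  shows "map_fact (interp [x]) \<phi> \<in> rels_of W \<longleftrightarrow> \<phi> \<in> {FE (Bs 0) (Tv 0), FL (Bs 0) (Tv 0), FL (Bs 1) (Tv 0)}"
proof -
  have at: "\<forall>a\<in>set_fact \<phi>. a = Bs 0 \<or> a = Bs 1 \<or> a = Tv 0"
  proof
    fix a assume a: "a \<in> set_fact \<phi>"
    show "a = Bs 0 \<or> a = Bs 1 \<or> a = Tv 0"
    proof (cases a)
      case (Bs j) hence "j < 2" using proper_Bs_lt[OF p] a by simp
      thus ?thesis using Bs by (auto simp: less_2_cases_iff)
    next
      case (Tv i) hence "i < 1" using proper_Tv_lt[OF p] a by simp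
      thus ?thesis using Tv by simp
    qed
  qed
  have t0: "Tv 0 \<in> set_fact \<phi>" by (rule proper_Tv0[OF p])
  have hb: "\<exists>j. Bs j \<in> set_fact \<phi>" using p unfolding proper_def by blast
  show ?thesis using at t0 hb x by (cases \<phi>) (auto simp: W_def)
qed

lemma neg:
  assumes tr: "trp (\<lambda>X. X \<in> K) B1 B2 g'"
    and agr: "\<forall>x\<in>plus_car A1. g' (hmap 1 1 False x) = hmap 1 2 True x"
    and fixb: "\<forall>b\<in>ecar B1. g' (PB b) = PB b"
  shows False
proof -
  have ie: "is_emb (plus B1) (plus B2) g'" using tr unfolding trp_def by blast
  have Wi: "enumerated W \<and> W \<in> K \<and> init_seg B1 W"
    using WK unfolding K_def by (auto simp: init_seg_def B1_def W_def restr_def)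
  obtain B'' g0 where B'': "enumerated B''" "B'' \<in> K" "init_seg B2 B''" "tr_emb W B'' g0"
     "\<forall>a\<in>ecar B1. PB (g0 a) = g' (PB a)"
     and TP: "\<forall>as. as \<noteq> [] \<and> sorted_wrt (<) as \<and> set as \<subseteq> g0 ` ecar W \<and> (\<forall>a\<in>set as. card (ecar B2) \<le> a)
        \<longrightarrow> PT (length as - 1) (tp B'' (card (ecar B2)) as) \<in> g' ` plus_car B1"
    using tr Wi unfolding trp_def by blast
  have cB1: "card (ecar B1) = 2" and cB2: "card (ecar B2) = 3" by (simp_all add: B1_def B2_def)
  have g00: "g0 0 = 0" "g0 1 = 1" using B''(5) fixb by (auto simp: B1_def)
  have em: "emb_e W B'' g0" using B''(4) unfolding tr_emb_def by blast
  have emr: "\<And>\<phi>. set_fact \<phi> \<subseteq> {..<4} \<Longrightarrow> \<phi> \<in> rels_of W \<longleftrightarrow> map_fact g0 \<phi> \<in> rels_of B''"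
    using em unfolding emb_e_def by (auto simp: W_def)
  have injg: "inj_on g0 {..<4}" using em unfolding emb_e_def by (auto simp: W_def)
  have rB2: "restr B'' 3 = B2" using B''(3) cB2 unfolding init_seg_def by auto
  have eB2: "eE B'' \<inter> ({..<3} \<times> {..<3}) = {(2,1)}" using arg_cong[OF rB2, of eE] by (simp add: B2_def)
  have E21: "(2,1) \<in> eE B''" using eB2 by blast
  have L12: "1 \<le> g0 2" using emr[of "FL 1 2"] g00 by (simp add: W_def)
  have L23: "g0 2 \<le> g0 3" using emr[of "FL 2 3"] by (simp add: W_def)
  have E02: "(0, g0 2) \<in> eE B''" using emr[of "FE 0 2"] g00 by (simp add: W_def)
  have H123: "(1, g0 2, g0 3) \<in> eH B''" using emr[of "FH 1 2 3"] g00 by (simp add: W_def)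
  have n1: "g0 2 \<noteq> g0 1" "g0 2 \<noteq> g0 3"
  proof
    assume "g0 2 = g0 1" hence "(2::nat) = 1" by (rule inj_onD[OF injg]) auto
    thus False by simp
  next
    show "g0 2 \<noteq> g0 3"
    proof
      assume "g0 2 = g0 3" hence "(2::nat) = 3" by (rule inj_onD[OF injg]) auto
      thus False by simp
    qed
  qed
  have n2: "g0 2 \<noteq> 2"
  proof
    assume "g0 2 = 2"
    hence "(0, 2) \<in> eE B'' \<inter> ({..<3} \<times> {..<3})" using E02 by simp
    thus False using eB2 by simp
  qed
  have ge: "3 \<le> g0 2" "3 \<le> g0 3" "g0 2 < g0 3" using L12 L23 n1 n2 g00 by auto
  define T0 where "T0 = {FE (Bs 0) (Tv 0), FL (Bs 0) (Tv 0), FL (Bs 1) (Tv 0)}"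
  define U where "U = {FE (Bs 0) (Tv 0), FL (Bs 0) (Tv 0)}"
  have e1: "{FL (Bs j) (Tv 0) |j. 1 \<le> j \<and> j < 1 + 1} = {FL (Bs 1) (Tv 0)}" by auto
  have fU: "hmap 1 1 False (PT 0 U) = PT 0 T0"
    unfolding T0_def U_def by (auto simp: rl_def extra_def e1 sh_def)
  have UA: "PT 0 U \<in> plus_car A1"
    unfolding U_def by (auto simp: A1_def intro: proper_FE proper_FL)
  have T0p: "T0 \<subseteq> Collect (proper 2 1)"
    unfolding T0_def by (auto intro: proper_FE proper_FL)
  have R2: "FE (Bs 2) (Tv 0) \<in> rl 1 2 True U" by (simp add: rl_def extra_def U_def)
  have key: "(2, g0 x) \<in> eE B''" if x: "x = 2 \<or> x = 3" for x
  proof -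
    have gx: "3 \<le> g0 x" "x \<in> ecar W" using x ge by (auto simp: W_def)
    let ?R = "tp B'' 3 [g0 x]"
    have "PT 0 ?R \<in> g' ` plus_car B1" using TP[rule_format, of "[g0 x]"] gx cB2 by simp
    then obtain p where p: "p \<in> plus_car B1" "g' p = PT 0 ?R" by (metis imageE)
    have Rp: "?R \<subseteq> Collect (proper 3 1)" by (auto simp: tp_def)
    have injB: "inj_on g' (plus_car B1)" using ie unfolding is_emb_def plus_def by simp
    obtain T1 where pT: "p = PT 0 T1" and T1p: "T1 \<subseteq> Collect (proper 2 1)"
    proof (cases p)
      case (PB j)
      hence "j \<in> ecar B1" using p by simp
      hence "g' p = PB j" using fixb PB by simp
      thus ?thesis using p(2) by simp
    next
      case (PT i T1)
      show ?thesis
      proof (cases i)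
        case 0 thus ?thesis using PT p(1) cB1 that by simp
      next
        case (Suc k)
        have "plus_fn (g' p) = map_option g' (plus_fn p)" using ie p(1) unfolding is_emb_def plus_def by simp
        hence "g' (PT k (trunc (Suc k) T1)) = PT 0 ?R" using p(2) PT Suc by simp
        moreover have "PT k (trunc (Suc k) T1) \<in> plus_car B1"
        proof -
          have "T1 \<subseteq> Collect (proper 2 (Suc (Suc k)))" using p(1) PT Suc cB1 by simp
          hence "trunc (Suc k) T1 \<subseteq> Collect (proper 2 (Suc k))"
            unfolding trunc_def using proper_trunc by blast
          thus ?thesis using cB1 by simp
        qed
        ultimately have "PT k (trunc (Suc k) T1) = p" using p injB by (metis inj_on_def)
        thus ?thesis using PT Suc by simp
      qed
    qed
    have tT1: "trunc 1 T1 = T1" using trunc_id[OF T1p] .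
    have tR: "trunc 1 ?R = ?R" using trunc_id[OF Rp] .
    have equiv: "\<phi> \<in> T1 \<longleftrightarrow> \<phi> \<in> T0" if p\<phi>: "proper 2 1 \<phi>" for \<phi>
    proof -
      have at: "\<forall>a\<in>set_fact \<phi>. (\<exists>j. a = Bs j \<and> j < 2) \<or> a = Tv 0"
      proof
        fix a assume a: "a \<in> set_fact \<phi>"
        show "(\<exists>j. a = Bs j \<and> j < 2) \<or> a = Tv 0"
        proof (cases a)
          case (Bs j) thus ?thesis using proper_Bs_lt[OF p\<phi>] a by simp
        next
          case (Tv i) thus ?thesis using proper_Tv_lt[OF p\<phi>] a by simp
        qed
      qed
      have s1: "set_fact (map_fact (sig T1) \<phi>) \<subseteq> plus_car B1"
        using at p(1) pT tT1 by (auto simp: fact.set_map B1_def)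
      have c1: "map_fact (sig T1) \<phi> \<in> plus_rels B1 \<longleftrightarrow> \<phi> \<in> T1" by (rule sig_rel[OF T1p p\<phi> cB1])
      have c2: "map_fact (sig T1) \<phi> \<in> plus_rels B1 \<longleftrightarrow> map_fact g' (map_fact (sig T1) \<phi>) \<in> plus_rels B2"
        using ie s1 unfolding is_emb_def plus_def by simp
      have c3: "map_fact g' (map_fact (sig T1) \<phi>) = map_fact (sig ?R) \<phi>"
        unfolding fact.map_comp
      proof (rule fact.map_cong[OF refl])
        fix a assume "a \<in> set_fact \<phi>"
        hence "(\<exists>j. a = Bs j \<and> j < 2) \<or> a = Tv 0" using at by blast
        thus "(g' \<circ> sig T1) a = sig ?R a"
        proof
          assume "\<exists>j. a = Bs j \<and> j < 2"
          then obtain j where "a = Bs j" "j < 2" by blast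
          thus ?thesis using fixb by (simp add: B1_def)
        next
          assume "a = Tv 0"
          thus ?thesis using tT1 tR p(2) pT by simp
        qed
      qed
      have p3: "proper 3 1 \<phi>" using proper_mono[OF p\<phi>] by simp
      have c4: "map_fact (sig ?R) \<phi> \<in> plus_rels B2 \<longleftrightarrow> \<phi> \<in> ?R" by (rule sig_rel[OF Rp p3 cB2])
      have c5: "\<phi> \<in> ?R \<longleftrightarrow> map_fact (interp [g0 x]) \<phi> \<in> rels_of B''" using p3 by (simp add: tp_def)
      have c6: "map_fact (interp [g0 x]) \<phi> = map_fact g0 (map_fact (interp [x]) \<phi>)"
        unfolding fact.map_comp
      proof (rule fact.map_cong[OF refl])
        fix a assume "a \<in> set_fact \<phi>"
        hence "(\<exists>j. a = Bs j \<and> j < 2) \<or> a = Tv 0" using at by blast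
        thus "interp [g0 x] a = (g0 \<circ> interp [x]) a" using g00 by (auto simp: less_2_cases_iff)
      qed
      have s7: "set_fact (map_fact (interp [x]) \<phi>) \<subseteq> {..<4}"
        using at x by (auto simp: fact.set_map)
      have c7: "map_fact (interp [x]) \<phi> \<in> rels_of W \<longleftrightarrow> map_fact g0 (map_fact (interp [x]) \<phi>) \<in> rels_of B''"
        by (rule emr[OF s7])
      have c8: "map_fact (interp [x]) \<phi> \<in> rels_of W \<longleftrightarrow> \<phi> \<in> T0" unfolding T0_def by (rule Wtype[OF x p\<phi>])
      show ?thesis using c1 c2 c3 c4 c5 c6 c7 c8 by simp
    qed
    have "T1 = T0"
    proof (intro set_eqI iffI)
      fix \<phi> assume "\<phi> \<in> T1" thus "\<phi> \<in> T0" using equiv T1p by blast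
    next
      fix \<phi> assume "\<phi> \<in> T0" thus "\<phi> \<in> T1" using equiv T0p by blast
    qed
    hence "p = hmap 1 1 False (PT 0 U)" using pT fU by simp
    moreover have "g' (hmap 1 1 False (PT 0 U)) = hmap 1 2 True (PT 0 U)" using agr UA by blast
    ultimately have "g' p = hmap 1 2 True (PT 0 U)" by simp
    hence "?R = rl 1 2 True U" using p(2) by simp
    hence "FE (Bs 2) (Tv 0) \<in> ?R" using R2 by simp
    thus ?thesis by (simp add: tp_def)
  qed
  have "mono_EH F B'' (\<lambda>k. if k = 0 then 1 else if k = 1 then 2 else if k = 2 then g0 2 else g0 3)"
    by (rule monoI) (use E21 key[of 2] key[of 3] H123 ge B''(1) in auto)
  thus False using B''(2) unfolding K_def by blast
qed

theorem proposition2: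
  shows "\<not> type_respecting_AP K"
proof
  assume T: "type_respecting_AP K"
  have m3: "Max {..<3::nat} = 2"
  proof -
    have "{..<3::nat} = {0,1,2}" by auto
    thus ?thesis by simp
  qed
  have hyp: "A1 \<in> K \<and> B1 \<in> K \<and> B2 \<in> K \<and> enumerated A1 \<and> enumerated B1 \<and> enumerated B2 \<and>
       finite (ecar A1) \<and> finite (ecar B1) \<and> finite (ecar B2) \<and>
       ecar B2 - ecar B1 = {Max (ecar B2)} \<and> restr B2 (card (ecar B1)) = B1 \<and>
       trp (\<lambda>X. X \<in> K) A1 B1 (hmap 1 1 False) \<and> trp (\<lambda>X. X \<in> K) A1 B2 (hmap 1 2 True) \<and>
       trp (\<lambda>_. True) B1 B2 (hmap 2 1 True) \<and> (\<forall>b\<in>ecar B1. hmap 2 1 True (PB b) = PB b) \<and>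
       (\<forall>x\<in>plus_car A1. hmap 2 1 True (hmap 1 1 False x) = hmap 1 2 True x)"
  proof (intro conjI)
    show "A1 \<in> K" "B1 \<in> K" "B2 \<in> K" by (rule A1K B1K B2K)+
    show "enumerated A1" "enumerated B1" "enumerated B2" using A1K B1K B2K unfolding K_def by auto
    show "finite (ecar A1)" "finite (ecar B1)" "finite (ecar B2)" by (simp_all add: A1_def B1_def B2_def)
    show "ecar B2 - ecar B1 = {Max (ecar B2)}" by (auto simp: B1_def B2_def m3)
    show "restr B2 (card (ecar B1)) = B1" by (auto simp: B1_def B2_def restr_def)
    show "trp (\<lambda>X. X \<in> K) A1 B1 (hmap 1 1 False)" by (rule trp_f)
    show "trp (\<lambda>X. X \<in> K) A1 B2 (hmap 1 2 True)" by (rule trp_f')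
    show "trp (\<lambda>_. True) B1 B2 (hmap 2 1 True)" by (rule trp_g)
    show "\<forall>b\<in>ecar B1. hmap 2 1 True (PB b) = PB b" by (auto simp: B1_def sh_def)
    show "\<forall>x\<in>plus_car A1. hmap 2 1 True (hmap 1 1 False x) = hmap 1 2 True x" by (rule comp_fg)
  qed
  have "\<exists>g'. trp (\<lambda>X. X \<in> K) B1 B2 g' \<and> (\<forall>x\<in>plus_car A1. g' (hmap 1 1 False x) = hmap 1 2 True x) \<and>
               (\<forall>b\<in>ecar B1. g' (PB b) = PB b)"
    using T hyp unfolding type_respecting_AP_def by blast
  then obtain g' where "trp (\<lambda>X. X \<in> K) B1 B2 g'" "\<forall>x\<in>plus_car A1. g' (hmap 1 1 False x) = hmap 1 2 True x"
    "\<forall>b\<in>ecar B1. g' (PB b) = PB b" by blast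
  thus False by (rule neg)
qed


end
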